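(* For every enhanced Gelfand--Zetlin pattern $P$ with top row $\lambda$, the cell $C_P$ is nonempty and homeomorphic to an open ball of dimension $\mathrm{rk}\,P$.
   Context: Let $\lambda=(\lambda_1\ge\dots\ge\lambda_n)$ be a partition. Coordinates $y_{ij}$ ($i,j\ge1$, $i+j\le n$) on $\mathbb{R}^{n(n-1)/2}$, with $y_{0j}=\lambda_{n+1-j}$; $GZ(\lambda)$ is defined by $y_{i-1,j}\le y_{ij}\le y_{i-1,j+1}$. A GZ pattern with top row $\lambda$ is an integer array $a_{ij}$, $0\le i\le n-1$, $1\le j\le n-i$, with $a_{0j}=\lambda_{n+1-j}$ and $a_{i-1,j}\le a_{ij}\le a_{i-1,j+1}$. An enhanced GZ pattern is such an array with encircled entries and edges (each joining $a_{ij}$, $i\ge1$, with $a_{i-1,j}$ or $a_{i-1,j+1}$) such that: (1) row $0$ entries are encircled; (2) joined entries are equal, the lower one encircled; (3) for $i\ge1$: both $a_{ij},a_{i,j+1}$ are joined to $a_{i-1,j+1}$ iff both are joined to $a_{i+1,j}$; (4) if $a_{0j}=a_{0,j+1}$ then $a_{1j}$ is encircled and joined to both; (5) if $a_{i-1,j}<a_{i-1,j+1}$ and $a_{ij}=a_{i-1,j}$, then $a_{ij}$ is encircled and joined to $a_{i-1,j}$; (6) if $a_{i-1,j}<a_{i-1,j+1}$, $a_{ij}=a_{i-1,j+1}$, $a_{ij}$ encircled, then joined to $a_{i-1,j+1}$; (7) if $a_{i-1,j}=a_{i-1,j+1}=a_{ij}$ and the two upper entries are connected by a path of edges, then $a_{ij}$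 is encircled and joined to both; (8) if $a_{i-1,j}=a_{i-1,j+1}=a_{ij}$ and $a_{ij}$ is encircled, it is joined to at least one of them. The rank $\mathrm{rk}\,P$ is the number of non-encircled entries. Cell $C_P$: for each $i\ge1$ impose: if $a_{ij}$ is joined to $a_{i-1,j}$ (resp. $a_{i-1,j+1}$), then $y_{ij}=y_{i-1,j}$ (resp. $y_{ij}=y_{i-1,j+1}$); if no edge goes up from $a_{ij}$ and it is encircled, $y_{ij}=a_{ij}$; if no edge goes up and it is not encircled, impose $a_{ij}-1<y_{ij}$ if $a_{ij}-a_{i-1,j}\ge2$, else $y_{i-1,j}<y_{ij}$, and $y_{ij}<y_{i-1,j+1}$ if $a_{i-1,j+1}=a_{ij}$, else $y_{ij}<a_{ij}$. Let $\widehat{C_P}$ be the set so defined, $L$ its affine span, and $C_P=\widehat{C_P}\cap(GZ(\lambda)\cap L)^0$, where $(\cdot)^0$ is the relative interior in $L$. *)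

theory Defs
  imports "HOL-Analysis.Analysis"
begin

definition is_partition :: "nat \<Rightarrow> (nat \<Rightarrow> int) \<Rightarrow> bool" where
  "is_partition n lam \<longleftrightarrow>
     (\<forall>k. 1 \<le> k \<and> k < n \<longrightarrow> lam (k+1) \<le> lam k) \<and> (\<forall>k. 1 \<le> k \<and> k \<le> n \<longrightarrow> 0 \<le> lam k)"

definition gz_pos :: "nat \<Rightarrow> nat \<Rightarrow> nat \<Rightarrow> bool" where
  "gz_pos n i j \<longleftrightarrow> 1 \<le> j \<and> i + j \<le> n"

definition gz_coords :: "nat \<Rightarrow> (nat \<times> nat) set" where
  "gz_coords n = {(i,j). 1 \<le> i \<and> 1 \<le> j \<and> i + j \<le> n}"

text \<open>R^(n(n-1)/2) realised as the real functions on gz_coords n (zero elsewhere),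
  with the (product = Euclidean) topology.\<close>
definition gz_space :: "nat \<Rightarrow> (nat \<times> nat \<Rightarrow> real) set" where
  "gz_space n = {y. \<forall>p. p \<notin> gz_coords n \<longrightarrow> y p = 0}"

definition yext :: "nat \<Rightarrow> (nat \<Rightarrow> int) \<Rightarrow> (nat \<times> nat \<Rightarrow> real) \<Rightarrow> nat \<Rightarrow> nat \<Rightarrow> real" where
  "yext n lam y i j = (if i = 0 then real_of_int (lam (n + 1 - j)) else y (i, j))"

definition GZ_polytope :: "nat \<Rightarrow> (nat \<Rightarrow> int) \<Rightarrow> (nat \<times> nat \<Rightarrow> real) set" where
  "GZ_polytope n lam = {y \<in> gz_space n. \<forall>i j. 1 \<le> i \<and> gz_pos n i j \<longrightarrow>
      yext n lam y (i-1) j \<le> y (i,j) \<and> y (i,j) \<le> yext n lam y (i-1) (j+1)}"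

definition is_GZ_pattern :: "nat \<Rightarrow> (nat \<Rightarrow> int) \<Rightarrow> (nat \<Rightarrow> nat \<Rightarrow> int) \<Rightarrow> bool" where
  "is_GZ_pattern n lam a \<longleftrightarrow>
     (\<forall>j. 1 \<le> j \<and> j \<le> n \<longrightarrow> a 0 j = lam (n + 1 - j)) \<and>
     (\<forall>i j. 1 \<le> i \<and> gz_pos n i j \<longrightarrow> a (i-1) j \<le> a i j \<and> a i j \<le> a (i-1) (j+1))"

text \<open>Enhanced pattern data: entries a, encircled entries E, and edges going up:
  EL i j means a_ij is joined to a_(i-1),j; ER i j means a_ij is joined to a_(i-1),(j+1).\<close>

definition gz_edge :: "(nat \<Rightarrow> nat \<Rightarrow> bool) \<Rightarrow> (nat \<Rightarrow> nat \<Rightarrow> bool) \<Rightarrow> nat \<times> nat \<Rightarrow> nat \<times> nat \<Rightarrow> bool" where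
  "gz_edge EL ER p q \<longleftrightarrow>
     (\<exists>i j. 1 \<le> i \<and>
        ((EL i j \<and> ((p = (i,j) \<and> q = (i-1,j)) \<or> (q = (i,j) \<and> p = (i-1,j)))) \<or>
         (ER i j \<and> ((p = (i,j) \<and> q = (i-1,j+1)) \<or> (q = (i,j) \<and> p = (i-1,j+1))))))"

definition gz_connected :: "(nat \<Rightarrow> nat \<Rightarrow> bool) \<Rightarrow> (nat \<Rightarrow> nat \<Rightarrow> bool) \<Rightarrow> nat \<times> nat \<Rightarrow> nat \<times> nat \<Rightarrow> bool" where
  "gz_connected EL ER = (gz_edge EL ER)\<^sup>*\<^sup>*"

definition is_enhanced_GZ :: "nat \<Rightarrow> (nat \<Rightarrow> int) \<Rightarrow> (nat \<Rightarrow> nat \<Rightarrow> int) \<Rightarrow> (nat \<Rightarrow> nat \<Rightarrow> bool)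
     \<Rightarrow> (nat \<Rightarrow> nat \<Rightarrow> bool) \<Rightarrow> (nat \<Rightarrow> nat \<Rightarrow> bool) \<Rightarrow> bool" where
  "is_enhanced_GZ n lam a E EL ER \<longleftrightarrow>
     is_GZ_pattern n lam a \<and>
     \<comment> \<open>encircling and edges only concern entries of the pattern; edges go up from rows i >= 1\<close>
     (\<forall>i j. E i j \<longrightarrow> gz_pos n i j) \<and>
     (\<forall>i j. EL i j \<longrightarrow> 1 \<le> i \<and> gz_pos n i j) \<and>
     (\<forall>i j. ER i j \<longrightarrow> 1 \<le> i \<and> gz_pos n i j) \<and>
     \<comment> \<open>(1)\<close>
     (\<forall>j. gz_pos n 0 j \<longrightarrow> E 0 j) \<and>
     \<comment> \<open>(2)\<close>
     (\<forall>i j. EL i j \<longrightarrow> a i j = a (i-1) j \<and> E i j) \<and>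
     (\<forall>i j. ER i j \<longrightarrow> a i j = a (i-1) (j+1) \<and> E i j) \<and>
     \<comment> \<open>(3)\<close>
     (\<forall>i j. 1 \<le> i \<and> gz_pos n i j \<and> gz_pos n i (j+1) \<longrightarrow>
        ((ER i j \<and> EL i (j+1)) \<longleftrightarrow> (EL (i+1) j \<and> ER (i+1) j))) \<and>
     \<comment> \<open>(4)\<close>
     (\<forall>j. gz_pos n 0 j \<and> gz_pos n 0 (j+1) \<and> a 0 j = a 0 (j+1) \<longrightarrow>
        E 1 j \<and> EL 1 j \<and> ER 1 j) \<and>
     \<comment> \<open>(5)\<close>
     (\<forall>i j. 1 \<le> i \<and> gz_pos n i j \<and> a (i-1) j < a (i-1) (j+1) \<and> a i j = a (i-1) j \<longrightarrow>
        E i j \<and> EL i j) \<and>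
     \<comment> \<open>(6)\<close>
     (\<forall>i j. 1 \<le> i \<and> gz_pos n i j \<and> a (i-1) j < a (i-1) (j+1) \<and> a i j = a (i-1) (j+1) \<and> E i j \<longrightarrow>
        ER i j) \<and>
     \<comment> \<open>(7)\<close>
     (\<forall>i j. 1 \<le> i \<and> gz_pos n i j \<and> a (i-1) j = a (i-1) (j+1) \<and> a i j = a (i-1) j \<and>
        gz_connected EL ER (i-1, j) (i-1, j+1) \<longrightarrow> E i j \<and> EL i j \<and> ER i j) \<and>
     \<comment> \<open>(8)\<close>
     (\<forall>i j. 1 \<le> i \<and> gz_pos n i j \<and> a (i-1) j = a (i-1) (j+1) \<and> a i j = a (i-1) j \<and> E i j \<longrightarrow>
        EL i j \<or> ER i j)"

definition gz_rank :: "nat \<Rightarrow> (nat \<Rightarrow> nat \<Rightarrow> bool) \<Rightarrow> nat" where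
  "gz_rank n E = card {(i,j). gz_pos n i j \<and> \<not> E i j}"

definition cell_hat :: "nat \<Rightarrow> (nat \<Rightarrow> int) \<Rightarrow> (nat \<Rightarrow> nat \<Rightarrow> int) \<Rightarrow> (nat \<Rightarrow> nat \<Rightarrow> bool)
     \<Rightarrow> (nat \<Rightarrow> nat \<Rightarrow> bool) \<Rightarrow> (nat \<Rightarrow> nat \<Rightarrow> bool) \<Rightarrow> (nat \<times> nat \<Rightarrow> real) set" where
  "cell_hat n lam a E EL ER = {y \<in> gz_space n. \<forall>i j. 1 \<le> i \<and> gz_pos n i j \<longrightarrow>
      (EL i j \<longrightarrow> y (i,j) = yext n lam y (i-1) j) \<and>
      (ER i j \<longrightarrow> y (i,j) = yext n lam y (i-1) (j+1)) \<and>
      (\<not> EL i j \<and> \<not> ER i j \<and> E i j \<longrightarrow> y (i,j) = real_of_int (a i j)) \<and>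
      (\<not> EL i j \<and> \<not> ER i j \<and> \<not> E i j \<longrightarrow>
         (if a i j - a (i-1) j \<ge> 2 then real_of_int (a i j) - 1 < y (i,j)
          else yext n lam y (i-1) j < y (i,j)) \<and>
         (if a (i-1) (j+1) = a i j then y (i,j) < yext n lam y (i-1) (j+1)
          else y (i,j) < real_of_int (a i j)))}"

definition affine_span_fun :: "('p \<Rightarrow> real) set \<Rightarrow> ('p \<Rightarrow> real) set" where
  "affine_span_fun S = {z. \<exists>F u. finite F \<and> F \<noteq> {} \<and> F \<subseteq> S \<and> sum u F = 1 \<and>
      z = (\<lambda>p. \<Sum>x\<in>F. u x * x p)}"

definition cell :: "nat \<Rightarrow> (nat \<Rightarrow> int) \<Rightarrow> (nat \<Rightarrow> nat \<Rightarrow> int) \<Rightarrow> (nat \<Rightarrow> nat \<Rightarrow> bool)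
     \<Rightarrow> (nat \<Rightarrow> nat \<Rightarrow> bool) \<Rightarrow> (nat \<Rightarrow> nat \<Rightarrow> bool) \<Rightarrow> (nat \<times> nat \<Rightarrow> real) set" where
  "cell n lam a E EL ER =
     (let Ch = cell_hat n lam a E EL ER; L = affine_span_fun Ch in
      Ch \<inter> ((top_of_set L) interior_of (GZ_polytope n lam \<inter> L)))"

definition open_ball_dim :: "nat \<Rightarrow> (nat \<Rightarrow> real) set" where
  "open_ball_dim k = {x. (\<forall>i\<ge>k. x i = 0) \<and> (\<Sum>i<k. (x i)\<^sup>2) < 1}"

end

theory Submission
  imports Defs
begin


definition Xs :: "nat \<Rightarrow> (nat \<Rightarrow> real) set" where "Xs k = {x. \<forall>i\<ge>k. x i = 0}"
definition lin :: "nat \<Rightarrow> (nat \<Rightarrow> real) \<Rightarrow> (nat \<Rightarrow> real) \<Rightarrow> real" where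
  "lin k a x = (\<Sum>i<k. a i * x i)"
definition aff :: "nat \<Rightarrow> real \<times> (nat \<Rightarrow> real) \<Rightarrow> (nat \<Rightarrow> real) \<Rightarrow> real" where
  "aff k g x = fst g + lin k (snd g) x"

fun mu :: "nat \<Rightarrow> (real \<times> (nat \<Rightarrow> real)) list \<Rightarrow> (nat \<Rightarrow> real) \<Rightarrow> real" where
  "mu k [] x = 0"
| "mu k (g#gs) x = max (- lin k (snd g) x / fst g) (mu k gs x)"

lemma cont_coord: "continuous_on S (\<lambda>x::'a\<Rightarrow>real. x i)"
  by (rule continuous_on_subset[OF continuous_on_product_coordinates]) simp

lemma lin_scale: "lin k a (\<lambda>i. s * x i) = s * lin k a x"
  by (simp add: lin_def sum_distrib_left algebra_simps)

lemma cont_lin [continuous_intros]: "continuous_on S (lin k a)"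
  unfolding lin_def by (intro continuous_on_sum continuous_on_mult_left cont_coord)

lemma cont_mu [continuous_intros]: "continuous_on S (mu k gs)"
proof (induction gs)
  case Nil then show ?case by simp
next
  case (Cons g gs)
  have e: "(\<lambda>x. - lin k (snd g) x / fst g) = (\<lambda>x. (- 1 / fst g) * lin k (snd g) x)" by auto
  have "continuous_on S (\<lambda>x. - lin k (snd g) x / fst g)"
    unfolding e by (intro continuous_on_mult_left cont_lin) 
  then show ?case using Cons by (simp add: continuous_on_max)
qed

lemma cont_nn [continuous_intros]: "continuous_on S (\<lambda>x. L2_set x {..<k})"
  unfolding L2_set_def by (intro continuous_on_real_sqrt continuous_on_sum continuous_on_power cont_coord)

lemma mu_nonneg: "0 \<le> mu k gs x"
  by (induction gs) auto

lemma mu_scale: "0 \<le> s \<Longrightarrow> mu k gs (\<lambda>i. s * x i) = s * mu k gs x"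
proof (induction gs)
  case Nil then show ?case by simp
next
  case (Cons g gs)
  have h: "- lin k (snd g) (\<lambda>i. s * x i) / fst g = s * (- lin k (snd g) x / fst g)"
    by (simp add: lin_scale)
  have m: "max (s * a) (s * b) = s * max a b" for a b
    using Cons.prems by (simp add: max_def mult_left_mono) (smt (verit) mult_le_cancel_left)
  show ?case by (simp only: mu.simps h Cons.IH[OF Cons.prems] m)
qed

lemma mu_less1:
  assumes "\<forall>g\<in>set gs. fst g > 0"
  shows "mu k gs x < 1 \<longleftrightarrow> (\<forall>g\<in>set gs. aff k g x > 0)"
  using assms
proof (induction gs)
  case Nil then show ?case by simp
next
  case (Cons g gs)
  have "fst g > 0" using Cons by simp
  then have "- lin k (snd g) x / fst g < 1 \<longleftrightarrow> aff k g x > 0"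
    by (auto simp: aff_def field_simps)
  then show ?case using Cons by auto
qed

lemma abs_le_nn: "(i::nat) < k \<Longrightarrow> \<bar>x i\<bar> \<le> L2_set x {..<k}"
proof -
  assume "i < k"
  have "\<bar>x i\<bar> = sqrt ((x i)\<^sup>2)" by simp
  also have "\<dots> \<le> sqrt (\<Sum>j<k. (x j)\<^sup>2)"
    using \<open>i < k\<close> by (intro real_sqrt_le_mono) (rule member_le_sum[where f="\<lambda>j. (x j)\<^sup>2"], auto)
  finally show ?thesis by (simp add: L2_set_def)
qed

lemma lin_bound: "\<bar>lin k a x\<bar> \<le> (\<Sum>i<k. \<bar>a i\<bar>) * L2_set x {..<k}"
proof -
  have "\<bar>lin k a x\<bar> \<le> (\<Sum>i<k. \<bar>a i * x i\<bar>)" unfolding lin_def by (rule sum_abs)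
  also have "\<dots> \<le> (\<Sum>i<k. \<bar>a i\<bar> * L2_set x {..<k})"
    by (intro sum_mono) (simp add: abs_mult abs_le_nn mult_left_mono)
  finally show ?thesis by (simp add: sum_distrib_right)
qed

fun Mb :: "nat \<Rightarrow> (real \<times> (nat \<Rightarrow> real)) list \<Rightarrow> real" where
  "Mb k [] = 0"
| "Mb k (g#gs) = (\<Sum>i<k. \<bar>snd g i\<bar>) / fst g + Mb k gs"

lemma Mb_nonneg: "\<forall>g\<in>set gs. fst g > 0 \<Longrightarrow> 0 \<le> Mb k gs"
  by (induction gs) auto

lemma mu_bound:
  assumes "\<forall>g\<in>set gs. fst g > 0"
  shows "mu k gs x \<le> Mb k gs * L2_set x {..<k}"
  using assms
proof (induction gs)
  case Nil then show ?case by simp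
next
  case (Cons g gs)
  have c: "fst g > 0" using Cons by simp
  have "- lin k (snd g) x / fst g \<le> \<bar>lin k (snd g) x / fst g\<bar>"
    by linarith
  also have "\<dots> = \<bar>lin k (snd g) x\<bar> / fst g"
    using c by (simp add: abs_divide)
  also have "\<dots> \<le> (\<Sum>i<k. \<bar>snd g i\<bar>) * L2_set x {..<k} / fst g"
    using c lin_bound by (simp add: divide_right_mono)
  finally have 1: "- lin k (snd g) x / fst g \<le> (\<Sum>i<k. \<bar>snd g i\<bar>) / fst g * L2_set x {..<k}" by simp
  have 2: "mu k gs x \<le> Mb k gs * L2_set x {..<k}" using Cons by simp
  have 3: "0 \<le> (\<Sum>i<k. \<bar>snd g i\<bar>) / fst g * L2_set x {..<k}" using c by (simp add: sum_nonneg)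
  have 4: "0 \<le> Mb k gs * L2_set x {..<k}" using Cons Mb_nonneg by simp
  show ?case using 1 2 3 4 by (simp add: distrib_right)
qed

lemma Xs_nn0: "x \<in> Xs k \<Longrightarrow> L2_set x {..<k} = 0 \<Longrightarrow> x = (\<lambda>i. 0)"
proof
  fix i assume x: "x \<in> Xs k" "L2_set x {..<k} = 0"
  show "x i = 0"
  proof (cases "i < k")
    case True then show ?thesis using x(2) by (simp add: L2_set_eq_0_iff)
  next
    case False then show ?thesis using x(1) by (simp add: Xs_def)
  qed
qed

lemma open_ball_dim_alt: "open_ball_dim k = {x \<in> Xs k. L2_set x {..<k} < 1}"
  unfolding open_ball_dim_def Xs_def L2_set_def by auto


lemma contw: "continuous_on UNIV p \<Longrightarrow> continuous (at x within S) p"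
  by (meson UNIV_I continuous_on_eq_continuous_within continuous_within_subset subset_UNIV)

lemma cont_ratio:
  fixes p q :: "(nat \<Rightarrow> real) \<Rightarrow> real"
  assumes S: "S \<subseteq> Xs k" and cp: "continuous_on UNIV p" and cq: "continuous_on UNIV q"
   and nz: "\<forall>x\<in>S. L2_set x {..<k} \<noteq> 0 \<longrightarrow> q x \<noteq> 0"
   and bd: "\<forall>x\<in>S. \<bar>p x / q x\<bar> * L2_set x {..<k} \<le> C * L2_set x {..<k}"
  shows "continuous_on S (\<lambda>x. (\<lambda>i. p x / q x * x i))"
proof (rule continuous_on_coordinatewise_then_product)
  fix i
  show "continuous_on S (\<lambda>x. p x / q x * x i)"
    unfolding continuous_on_eq_continuous_within
  proof
    fix x assume xS: "x \<in> S"
    have cn: "continuous_on UNIV (\<lambda>x. L2_set x {..<k})" by (rule cont_nn)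
    have cc: "continuous_on UNIV (\<lambda>x::nat\<Rightarrow>real. x i)" by (rule cont_coord)
    show "continuous (at x within S) (\<lambda>x. p x / q x * x i)"
    proof (cases "L2_set x {..<k} = 0")
      case False
      then have "q x \<noteq> 0" using nz xS by auto
      then show ?thesis
        by (intro continuous_intros contw cp cq cc)
    next
      case True
      then have x0: "x = (\<lambda>i. 0)" using Xs_nn0 S xS by auto
      have "((\<lambda>x. p x / q x * x i) \<longlongrightarrow> 0) (at x within S)"
      proof (rule Lim_null_comparison)
        show "eventually (\<lambda>z. norm (p z / q z * z i) \<le> C * L2_set z {..<k}) (at x within S)"
          unfolding eventually_at_filter
        proof (rule always_eventually, intro allI impI)
          fix z assume "z \<noteq> x" "z \<in> S"
          have "\<bar>z i\<bar> \<le> L2_set z {..<k}"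
          proof (cases "i < k")
            case True then show ?thesis by (rule abs_le_nn)
          next
            case False then show ?thesis using S \<open>z \<in> S\<close> by (auto simp: Xs_def)
          qed
          then have "\<bar>p z / q z\<bar> * \<bar>z i\<bar> \<le> \<bar>p z / q z\<bar> * L2_set z {..<k}"
            by (intro mult_left_mono) auto
          also have "\<dots> \<le> C * L2_set z {..<k}" using bd \<open>z \<in> S\<close> by auto
          finally show "norm (p z / q z * z i) \<le> C * L2_set z {..<k}"
            by (simp add: abs_mult)
        qed
        have "((\<lambda>z. C * L2_set z {..<k}) \<longlongrightarrow> C * L2_set x {..<k}) (at x within S)"
          using contw[OF cn, of x S] unfolding continuous_within by (intro tendsto_mult tendsto_const)
        then show "((\<lambda>z. C * L2_set z {..<k}) \<longlongrightarrow> 0) (at x within S)" using True by simp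
      qed
      then show ?thesis unfolding continuous_within using x0 by simp
    qed
  qed
qed

lemma mu_zero: "mu k gs (\<lambda>i. 0) = 0"
  by (induction gs) (auto simp: lin_def)

lemma Xs_scale: "x \<in> Xs k \<Longrightarrow> (\<lambda>i. s * x i) \<in> Xs k"
  by (simp add: Xs_def)

lemma nn_scale: "0 \<le> s \<Longrightarrow> L2_set (\<lambda>i. s * x i) {..<k} = s * L2_set x {..<k}"
  by (simp add: L2_set_right_distrib)

lemma avg1: "(a::real) < b \<Longrightarrow> (a + b) / 2 < b" by simp
lemma avg2: "(a::real) < b \<Longrightarrow> a < (a + b) / 2" by simp

lemma G0:
  fixes gs :: "(real \<times> (nat \<Rightarrow> real)) list" and R :: real
  assumes pos: "\<forall>g\<in>set gs. fst g > 0"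
    and bnd: "\<forall>x\<in>{x \<in> Xs k. \<forall>g\<in>set gs. aff k g x > 0}. L2_set x {..<k} \<le> R"
  shows "{x \<in> Xs k. \<forall>g\<in>set gs. aff k g x > 0} homeomorphic open_ball_dim k"
proof -
  define V where "V = {x \<in> Xs k. mu k gs x < 1}"
  have Veq: "{x \<in> Xs k. \<forall>g\<in>set gs. aff k g x > 0} = V"
    unfolding V_def using mu_less1[OF pos] by auto
  define nn where "nn x = L2_set x {..<k}" for x :: "nat \<Rightarrow> real"
  define T where "T = {y \<in> Xs k. nn y < 1}"
  have Teq: "open_ball_dim k = T" unfolding T_def nn_def by (rule open_ball_dim_alt)
  have bndV: "\<And>x. x \<in> V \<Longrightarrow> nn x \<le> R" using bnd Veq unfolding nn_def by auto
  have z0: "(\<lambda>i. 0) \<in> Xs k" by (simp add: Xs_def)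
  have V0: "(\<lambda>i. 0) \<in> V" unfolding V_def using z0 by (simp add: mu_zero)
  have R0: "0 \<le> R" using bndV[OF V0] by (simp add: nn_def L2_set_def)
  have key: "nn x \<le> R * mu k gs x" if x: "x \<in> Xs k" for x
  proof (rule ccontr)
    assume "\<not> nn x \<le> R * mu k gs x"
    then have lt: "R * mu k gs x < nn x" by simp
    have m0: "0 \<le> mu k gs x" by (rule mu_nonneg)
    have n0: "0 < nn x" using lt R0 m0 by (smt (verit) mult_nonneg_nonneg)
    define s where "s = (if mu k gs x = 0 then (R + 1) / nn x else (R / nn x + 1 / mu k gs x) / 2)"
    have s0: "0 < s"
    proof (cases "mu k gs x = 0")
      case True then show ?thesis using n0 R0 by (simp add: s_def)
    next
      case False
      then have "0 < 1 / mu k gs x" using m0 by simp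
      moreover have "0 \<le> R / nn x" using R0 n0 by simp
      ultimately have "0 < R / nn x + 1 / mu k gs x" by linarith
      then show ?thesis using False by (simp add: s_def)
    qed
    have s1: "s * mu k gs x < 1"
    proof (cases "mu k gs x = 0")
      case True then show ?thesis by (simp add: s_def)
    next
      case False
      then have mp: "0 < mu k gs x" using m0 by simp
      have "R / nn x < 1 / mu k gs x" using lt mp n0 by (simp add: field_simps)
      then have "(R / nn x + 1 / mu k gs x) / 2 < 1 / mu k gs x" by (rule avg1)
      then have "s < 1 / mu k gs x" using False by (simp add: s_def)
      then show ?thesis using mp by (simp add: field_simps)
    qed
    have s2: "R < s * nn x"
    proof (cases "mu k gs x = 0")
      case True then show ?thesis using n0 by (simp add: s_def)
    next
      case False
      then have mp: "0 < mu k gs x" using m0 by simp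
      have "R / nn x < 1 / mu k gs x" using lt mp n0 by (simp add: field_simps)
      then have "R / nn x < (R / nn x + 1 / mu k gs x) / 2" by (rule avg2)
      then have "R / nn x < s" using False by (simp add: s_def)
      then show ?thesis using n0 by (simp add: field_simps)
    qed
    have "(\<lambda>i. s * x i) \<in> V"
      unfolding V_def using Xs_scale[OF x] mu_scale[of s k gs x] s0 s1 by simp
    then have "nn (\<lambda>i. s * x i) \<le> R" by (rule bndV)
    then show False using nn_scale[of s x k] s0 s2 unfolding nn_def by simp
  qed
  define f where "f x = (\<lambda>i. mu k gs x / nn x * x i)" for x :: "nat \<Rightarrow> real"
  define g where "g y = (\<lambda>i. nn y / mu k gs y * y i)" for y :: "nat \<Rightarrow> real"
  have fz: "f (\<lambda>i. 0) = (\<lambda>i. 0)" by (simp add: f_def)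
  have gz: "g (\<lambda>i. 0) = (\<lambda>i. 0)" by (simp add: g_def)
  have nnz: "x = (\<lambda>i. 0)" if "x \<in> Xs k" "nn x = 0" for x
    using Xs_nn0 that unfolding nn_def by blast
  have mupos: "0 < mu k gs x" if "x \<in> Xs k" "nn x \<noteq> 0" for x
  proof -
    have "0 < nn x" using that by (simp add: nn_def order_le_neq_trans)
    show ?thesis
    proof (rule ccontr)
      assume "\<not> 0 < mu k gs x"
      then have "mu k gs x = 0" using mu_nonneg[of k gs x] by simp
      then show False using key[OF that(1)] \<open>0 < nn x\<close> by simp
    qed
  qed
  have hom: "homeomorphism V T f g"
  proof (rule homeomorphismI)
    show "continuous_on V f"
      unfolding f_def nn_def
    proof (rule cont_ratio[where C="Mb k gs"])
      show "V \<subseteq> Xs k" by (auto simp: V_def)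
      show "continuous_on UNIV (mu k gs)" by (rule cont_mu)
      show "continuous_on UNIV (\<lambda>x. L2_set x {..<k})" by (rule cont_nn)
      show "\<forall>x\<in>V. L2_set x {..<k} \<noteq> 0 \<longrightarrow> L2_set x {..<k} \<noteq> 0" by simp
      show "\<forall>x\<in>V. \<bar>mu k gs x / L2_set x {..<k}\<bar> * L2_set x {..<k} \<le> Mb k gs * L2_set x {..<k}"
      proof
        fix x assume "x \<in> V"
        show "\<bar>mu k gs x / L2_set x {..<k}\<bar> * L2_set x {..<k} \<le> Mb k gs * L2_set x {..<k}"
        proof (cases "L2_set x {..<k} = 0")
          case True then show ?thesis by simp
        next
          case False
          then have "\<bar>mu k gs x / L2_set x {..<k}\<bar> * L2_set x {..<k} = mu k gs x"
            using mu_nonneg[of k gs x] by simp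
          then show ?thesis using mu_bound[OF pos, of k x] by simp
        qed
      qed
    qed
    show "continuous_on T g"
      unfolding g_def nn_def
    proof (rule cont_ratio[where C="R"])
      show "T \<subseteq> Xs k" by (auto simp: T_def)
      show "continuous_on UNIV (mu k gs)" by (rule cont_mu)
      show "continuous_on UNIV (\<lambda>x. L2_set x {..<k})" by (rule cont_nn)
      show "\<forall>x\<in>T. L2_set x {..<k} \<noteq> 0 \<longrightarrow> mu k gs x \<noteq> 0"
        using mupos unfolding T_def nn_def by fastforce
      show "\<forall>x\<in>T. \<bar>L2_set x {..<k} / mu k gs x\<bar> * L2_set x {..<k} \<le> R * L2_set x {..<k}"
      proof
        fix x assume xT: "x \<in> T"
        then have xX: "x \<in> Xs k" by (simp add: T_def)
        show "\<bar>L2_set x {..<k} / mu k gs x\<bar> * L2_set x {..<k} \<le> R * L2_set x {..<k}"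
        proof (cases "L2_set x {..<k} = 0")
          case True then show ?thesis by simp
        next
          case False
          then have mp: "0 < mu k gs x" using mupos xX unfolding nn_def by blast
          have "L2_set x {..<k} / mu k gs x \<le> R"
            using key[OF xX] mp unfolding nn_def by (simp add: divide_le_eq)
          moreover have "\<bar>L2_set x {..<k} / mu k gs x\<bar> = L2_set x {..<k} / mu k gs x"
            using mp by simp
          ultimately show ?thesis by (metis L2_set_nonneg mult_right_mono)
        qed
      qed
    qed
    show "f ` V \<subseteq> T"
    proof
      fix y assume "y \<in> f ` V"
      then obtain x where xV: "x \<in> V" and y: "y = f x" by auto
      have xX: "x \<in> Xs k" using xV by (simp add: V_def)
      show "y \<in> T"
      proof (cases "nn x = 0")
        case True then show ?thesis using y nnz[OF xX] fz z0 by (simp add: T_def nn_def)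
      next
        case False
        have np: "0 < nn x" using False by (simp add: nn_def order_le_neq_trans)
        have "nn y = mu k gs x / nn x * nn x"
          unfolding y f_def nn_def using mu_nonneg[of k gs x] np
          by (intro nn_scale) (simp add: nn_def)
        also have "\<dots> = mu k gs x" using np by simp
        finally have "nn y < 1" using xV by (simp add: V_def)
        moreover have "y \<in> Xs k" unfolding y f_def by (rule Xs_scale[OF xX])
        ultimately show ?thesis by (simp add: T_def)
      qed
    qed
    show "g ` T \<subseteq> V"
    proof
      fix x assume "x \<in> g ` T"
      then obtain y where yT: "y \<in> T" and x: "x = g y" by auto
      have yX: "y \<in> Xs k" using yT by (simp add: T_def)
      show "x \<in> V"
      proof (cases "nn y = 0")
        case True then show ?thesis using x nnz[OF yX] gz V0 by simp
      next
        case False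
        have mp: "0 < mu k gs y" using mupos[OF yX False] .
        have "mu k gs x = nn y / mu k gs y * mu k gs y"
          unfolding x g_def using mp by (intro mu_scale) (simp add: nn_def)
        also have "\<dots> = nn y" using mp by simp
        finally have "mu k gs x < 1" using yT by (simp add: T_def)
        moreover have "x \<in> Xs k" unfolding x g_def by (rule Xs_scale[OF yX])
        ultimately show ?thesis by (simp add: V_def)
      qed
    qed
    show "g (f x) = x" if xV: "x \<in> V" for x
    proof -
      have xX: "x \<in> Xs k" using xV by (simp add: V_def)
      show ?thesis
      proof (cases "nn x = 0")
        case True then show ?thesis using nnz[OF xX] fz gz by simp
      next
        case False
        have np: "0 < nn x" using False by (simp add: nn_def order_le_neq_trans)
        have mp: "0 < mu k gs x" using mupos[OF xX False] .
        define t where "t = mu k gs x / nn x"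
        have t0: "0 < t" using np mp by (simp add: t_def)
        have fx: "f x = (\<lambda>i. t * x i)" by (simp add: f_def t_def)
        have "nn (f x) = t * nn x" unfolding fx nn_def using t0 by (intro nn_scale) simp
        moreover have "mu k gs (f x) = t * mu k gs x" unfolding fx using t0 by (intro mu_scale) simp
        ultimately have e: "g (f x) = (\<lambda>i. (t * nn x) / (t * mu k gs x) * (t * x i))"
          by (simp add: g_def fx)
        show ?thesis
        proof
          fix i show "g (f x) i = x i" unfolding e using t0 np mp by (simp add: t_def field_simps)
        qed
      qed
    qed
    show "f (g y) = y" if yT: "y \<in> T" for y
    proof -
      have yX: "y \<in> Xs k" using yT by (simp add: T_def)
      show ?thesis
      proof (cases "nn y = 0")
        case True then show ?thesis using nnz[OF yX] fz gz by simp
      next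
        case False
        have np: "0 < nn y" using False by (simp add: nn_def order_le_neq_trans)
        have mp: "0 < mu k gs y" using mupos[OF yX False] .
        define t where "t = nn y / mu k gs y"
        have t0: "0 < t" using np mp by (simp add: t_def)
        have gy: "g y = (\<lambda>i. t * y i)" by (simp add: g_def t_def)
        have "nn (g y) = t * nn y" unfolding gy nn_def using t0 by (intro nn_scale) simp
        moreover have "mu k gs (g y) = t * mu k gs y" unfolding gy using t0 by (intro mu_scale) simp
        ultimately have e: "f (g y) = (\<lambda>i. (t * mu k gs y) / (t * nn y) * (t * y i))"
          by (simp add: f_def gy)
        show ?thesis
        proof
          fix i show "f (g y) i = y i" unfolding e using t0 np mp by (simp add: t_def field_simps)
        qed
      qed
    qed
  qed
  then show ?thesis unfolding Veq Teq homeomorphic_def by blast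
qed


lemma lin_add: "lin k a (\<lambda>i. x i + z i) = lin k a x + lin k a z"
  by (simp add: lin_def algebra_simps sum.distrib)

lemma G1:
  assumes x0X: "x0 \<in> Xs k" and x0V: "\<forall>g\<in>set gs. aff k g x0 > 0"
   and bnd: "\<forall>x \<in> {x\<in>Xs k. \<forall>g\<in>set gs. aff k g x > 0}. \<forall>i<k. \<bar>x i\<bar> \<le> B"
  shows "{x \<in> Xs k. \<forall>g\<in>set gs. aff k g x > 0} homeomorphic open_ball_dim k"
proof -
  define V where "V = {x \<in> Xs k. \<forall>g\<in>set gs. aff k g x > 0}"
  define gs' where "gs' = map (\<lambda>g. (aff k g x0, snd g)) gs"
  define V' where "V' = {x \<in> Xs k. \<forall>g\<in>set gs'. aff k g x > 0}"
  have affsh: "aff k (aff k g x0, snd g) z = aff k g (\<lambda>i. x0 i + z i)" for g z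
    by (simp add: aff_def lin_add)
  have affsh2: "aff k (aff k (a,b) x0, b) (\<lambda>i. x i - x0 i) = aff k (a,b) x" for a b x
    using affsh[of "(a,b)" "\<lambda>i. x i - x0 i"] by simp
  have x0in: "x0 \<in> V" using x0X x0V by (simp add: V_def)
  have hom1: "homeomorphism V V' (\<lambda>x i. x i - x0 i) (\<lambda>z i. x0 i + z i)"
  proof (rule homeomorphismI)
    show "continuous_on V (\<lambda>x i. x i - x0 i)"
      by (intro continuous_on_coordinatewise_then_product continuous_on_diff cont_coord continuous_on_const)
    show "continuous_on V' (\<lambda>z i. x0 i + z i)"
      by (intro continuous_on_coordinatewise_then_product continuous_on_add cont_coord continuous_on_const)
    show "(\<lambda>x i. x i - x0 i) ` V \<subseteq> V'"
      using x0X by (auto simp: V_def V'_def gs'_def Xs_def affsh2)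
    show "(\<lambda>z i. x0 i + z i) ` V' \<subseteq> V"
      using x0X by (auto simp: V_def V'_def gs'_def Xs_def affsh)
  qed auto
  have pos: "\<forall>g\<in>set gs'. fst g > 0" using x0V by (auto simp: gs'_def)
  have bnd': "\<forall>z\<in>V'. L2_set z {..<k} \<le> (\<Sum>i<k. 2 * B)"
  proof
    fix z assume zV: "z \<in> V'"
    have "(\<lambda>i. x0 i + z i) \<in> V" using hom1 zV unfolding homeomorphism_def by auto
    then have b1: "\<forall>i<k. \<bar>x0 i + z i\<bar> \<le> B" using bnd unfolding V_def
      by (metis (no_types, lifting) mem_Collect_eq)
    have b2: "\<forall>i<k. \<bar>x0 i\<bar> \<le> B" using bnd x0in by (simp add: V_def)
    have "L2_set z {..<k} \<le> (\<Sum>i<k. \<bar>z i\<bar>)" by (rule L2_set_le_sum_abs)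
    also have "\<dots> \<le> (\<Sum>i<k. 2 * B)"
    proof (rule sum_mono)
      fix i assume "i \<in> {..<k}"
      then show "\<bar>z i\<bar> \<le> 2 * B" using b1 b2 by (smt (verit) lessThan_iff)
    qed
    finally show "L2_set z {..<k} \<le> (\<Sum>i<k. 2 * B)" .
  qed
  have "V' homeomorphic open_ball_dim k"
    unfolding V'_def by (rule G0[OF pos]) (use bnd' in \<open>simp add: V'_def\<close>)
  moreover have "V homeomorphic V'" using hom1 homeomorphic_def by blast
  ultimately show ?thesis unfolding V_def[symmetric] by (meson homeomorphic_trans)
qed



definition nonconst :: "nat \<Rightarrow> real \<times> (nat \<Rightarrow> real) \<Rightarrow> bool" where
  "nonconst k h \<longleftrightarrow> (\<exists>i<k. snd h i \<noteq> 0)"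

lemma aff_const: "\<not> nonconst k h \<Longrightarrow> aff k h x = fst h"
  by (simp add: nonconst_def aff_def lin_def)

lemma cont_aff: "continuous_on S (aff k h)"
  unfolding aff_def[abs_def] by (intro continuous_on_add continuous_on_const cont_lin)

lemma open_pos: "open {x. \<forall>h\<in>set hs. 0 < aff k h x}"
proof -
  have "{x. \<forall>h\<in>set hs. 0 < aff k h x} = (\<Inter>h\<in>set hs. {x. 0 < aff k h x})" by auto
  moreover have "open {x. 0 < aff k h x}" for h
    by (rule open_Collect_less) (auto intro: cont_aff)
  ultimately show ?thesis by auto
qed

lemma interior_Xs:
  assumes Q: "Q = {x \<in> Xs k. \<forall>h\<in>set hs. aff k h x \<ge> 0}"
  shows "(top_of_set (Xs k)) interior_of Q =
         {x \<in> Q. \<forall>h\<in>set hs. nonconst k h \<longrightarrow> aff k h x > 0}"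
proof (intro set_eqI iffI)
  fix x assume "x \<in> (top_of_set (Xs k)) interior_of Q"
  then obtain T where T: "openin (top_of_set (Xs k)) T" "x \<in> T" "T \<subseteq> Q"
    unfolding interior_of_def by auto
  have xQ: "x \<in> Q" using T by auto
  have xX: "x \<in> Xs k" using xQ Q by auto
  obtain W where O: "open W" "T = Xs k \<inter> W" using T(1) by (auto simp: openin_open)
  show "x \<in> {x \<in> Q. \<forall>h\<in>set hs. nonconst k h \<longrightarrow> aff k h x > 0}"
  proof (simp add: xQ, intro ballI impI)
    fix h assume hs: "h \<in> set hs" and nc: "nonconst k h"
    then obtain i where ik: "i < k" and ai: "snd h i \<noteq> 0" by (auto simp: nonconst_def)
    have ge: "aff k h x \<ge> 0" using xQ hs Q by auto
    show "0 < aff k h x"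
    proof (rule ccontr)
      assume "\<not> 0 < aff k h x"
      then have z: "aff k h x = 0" using ge by simp
      define sg where "sg = sgn (snd h i)"
      define p where "p t = (\<lambda>j. if j = i then x j - t * sg else x j)" for t :: real
      have cp: "continuous_on UNIV p"
        unfolding p_def
      proof (rule continuous_on_coordinatewise_then_product)
        fix j show "continuous_on UNIV (\<lambda>t. if j = i then x j - t * sg else x j)"
          by (cases "j = i") (auto intro!: continuous_intros)
      qed
      have "open (p -` W)" by (rule open_vimage[OF O(1) cp])
      moreover have "p 0 = x" unfolding p_def by (rule ext) simp
      then have "0 \<in> p -` W" using T(2) O(2) by simp
      ultimately obtain e where e: "e > 0" "ball 0 e \<subseteq> p -` W"
        by (meson openE)
      define t where "t = e / 2"
      have "t \<in> ball 0 e" using e by (simp add: t_def)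
      then have "p t \<in> W" using e by auto
      moreover have "p t \<in> Xs k" using xX ik by (auto simp: p_def Xs_def)
      ultimately have "p t \<in> Q" using T(3) O(2) by auto
      then have "aff k h (p t) \<ge> 0" using hs Q by auto
      moreover have "aff k h (p t) = aff k h x - t * \<bar>snd h i\<bar>"
      proof -
        have "lin k (snd h) (p t) = lin k (snd h) x - t * sg * snd h i"
        proof -
          have "lin k (snd h) (p t) = (\<Sum>j<k. snd h j * x j - (if j = i then t * sg * snd h i else 0))"
            unfolding lin_def p_def by (intro sum.cong) (auto simp: algebra_simps)
          also have "\<dots> = lin k (snd h) x - t * sg * snd h i"
            using ik by (simp add: lin_def sum_subtractf)
          finally show ?thesis .
        qed
        moreover have "sg * snd h i = \<bar>snd h i\<bar>"
          unfolding sg_def by (cases "snd h i" "0::real" rule: linorder_cases) auto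
        ultimately have "lin k (snd h) (p t) = lin k (snd h) x - t * \<bar>snd h i\<bar>"
          by (metis mult.assoc mult.commute)
        then show ?thesis by (simp add: aff_def)
      qed
      moreover have "t * \<bar>snd h i\<bar> > 0" using e ai by (simp add: t_def)
      ultimately show False using z by simp
    qed
  qed
next
  fix x assume x: "x \<in> {x \<in> Q. \<forall>h\<in>set hs. nonconst k h \<longrightarrow> aff k h x > 0}"
  define hs' where "hs' = filter (nonconst k) hs"
  define T where "T = Xs k \<inter> {x. \<forall>h\<in>set hs'. 0 < aff k h x}"
  have "openin (top_of_set (Xs k)) T" unfolding T_def by (intro openin_open_Int open_pos)
  moreover have "x \<in> T" using x Q by (auto simp: T_def hs'_def)
  moreover have "T \<subseteq> Q"
  proof
    fix z assume z: "z \<in> T"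
    have "aff k h z \<ge> 0" if hs: "h \<in> set hs" for h
    proof (cases "nonconst k h")
      case True
      then have "h \<in> set hs'" using hs by (simp add: hs'_def)
      then show ?thesis using z by (auto simp: T_def intro: less_imp_le)
    next
      case False
      then have "aff k h z = aff k h x" by (simp add: aff_const)
      then show ?thesis using x Q hs by auto
    qed
    then show "z \<in> Q" using z Q by (auto simp: T_def)
  qed
  ultimately show "x \<in> (top_of_set (Xs k)) interior_of Q" unfolding interior_of_def by blast
qed


definition dif :: "real \<times> (nat \<Rightarrow> real) \<Rightarrow> real \<times> (nat \<Rightarrow> real) \<Rightarrow> real \<times> (nat \<Rightarrow> real)" where
  "dif g h = (fst g - fst h, \<lambda>m. snd g m - snd h m)"
definition cst :: "real \<Rightarrow> real \<times> (nat \<Rightarrow> real)" where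
  "cst c = (c, \<lambda>m. 0)"

lemma aff_dif [simp]: "aff k (dif g h) x = aff k g x - aff k h x"
  by (simp add: dif_def aff_def lin_def sum_subtractf algebra_simps)
lemma aff_cst [simp]: "aff k (cst c) x = c"
  by (simp add: cst_def aff_def lin_def)
lemma dif_self: "\<not> nonconst k (dif g g)"
  by (simp add: dif_def nonconst_def)

lemma open_dir:
  fixes x :: "nat \<Rightarrow> real"
  assumes "open W" "x \<in> W"
  shows "\<exists>e>0. (\<lambda>j. if j = m then x j + e else x j) \<in> W"
proof -
  define p where "p t = (\<lambda>j. if j = m then x j + t else x j)" for t :: real
  have cp: "continuous_on UNIV p"
    unfolding p_def
  proof (rule continuous_on_coordinatewise_then_product)
    fix j show "continuous_on UNIV (\<lambda>t. if j = m then x j + t else x j)"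
      by (cases "j = m") (auto intro!: continuous_intros)
  qed
  have "open (p -` W)" by (rule open_vimage[OF assms(1) cp])
  moreover have "p 0 = x" unfolding p_def by (rule ext) simp
  then have "0 \<in> p -` W" using assms(2) by simp
  ultimately obtain e where e: "e > 0" "ball 0 e \<subseteq> p -` W" by (meson openE)
  have "e / 2 \<in> ball 0 e" using e by simp
  then have "p (e/2) \<in> W" using e(2) by blast
  then show ?thesis using e unfolding p_def by (intro exI[of _ "e/2"]) auto
qed

lemma aspan_gen:
  assumes x0: "x0 \<in> Xs k" and ep: "\<forall>m<k. ep m \<noteq> 0" and x: "x \<in> Xs k"
  shows "\<exists>F u. finite F \<and> F \<noteq> {} \<and> F \<subseteq> insert x0 ((\<lambda>m j. if j = m then x0 j + ep m else x0 j) ` {..<k}) \<and>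
     sum u F = 1 \<and> x = (\<lambda>i. \<Sum>v\<in>F. u v * v i)"
proof -
  define pt where "pt m = (\<lambda>j. if j = m then x0 j + ep m else x0 j)" for m
  define c where "c m = (x m - x0 m) / ep m" for m
  define F where "F = insert x0 (pt ` {..<k})"
  define u where "u v = (if v = x0 then 1 - (\<Sum>m<k. c m) else c (inv_into {..<k} pt v))" for v
  have inj: "inj_on pt {..<k}"
  proof (rule inj_onI)
    fix m m' assume "m \<in> {..<k}" "m' \<in> {..<k}" "pt m = pt m'"
    then have "pt m m = pt m' m" by simp
    then show "m = m'" using ep \<open>m \<in> {..<k}\<close> by (auto simp: pt_def split: if_splits)
  qed
  have nx0: "x0 \<notin> pt ` {..<k}"
  proof
    assume "x0 \<in> pt ` {..<k}"
    then obtain m where "m < k" "x0 = pt m" by auto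
    then have "x0 m = pt m m" by simp
    then show False using ep \<open>m < k\<close> by (simp add: pt_def)
  qed
  have sumF: "(\<Sum>v\<in>F. f v) = f x0 + (\<Sum>m<k. f (pt m))" for f :: "(nat \<Rightarrow> real) \<Rightarrow> real"
    unfolding F_def using nx0 by (simp add: sum.reindex[OF inj])
  have upt: "u (pt m) = c m" if "m < k" for m
  proof -
    have "pt m \<noteq> x0" using nx0 that by auto
    moreover have "inv_into {..<k} pt (pt m) = m" using inj that by (simp add: inv_into_f_f)
    ultimately show ?thesis by (simp add: u_def)
  qed
  have "sum u F = 1"
    unfolding sumF using upt by (simp add: u_def)
  moreover have "x = (\<lambda>i. \<Sum>v\<in>F. u v * v i)"
  proof
    fix i
    have "(\<Sum>v\<in>F. u v * v i) = u x0 * x0 i + (\<Sum>m<k. c m * pt m i)"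
      unfolding sumF using upt by simp
    also have "\<dots> = x0 i + (if i < k then c i * ep i else 0)"
    proof -
      have t: "c m * pt m i = c m * x0 i + (if m = i then c m * ep m else 0)" for m
        by (simp add: pt_def algebra_simps)
      have "(\<Sum>m<k. c m * pt m i) = (\<Sum>m<k. c m * x0 i) + (\<Sum>m<k. (if m = i then c m * ep m else 0))"
        unfolding t by (rule sum.distrib)
      also have "\<dots> = x0 i * (\<Sum>m<k. c m) + (if i < k then c i * ep i else 0)"
        by (simp add: sum_distrib_left mult.commute)
      finally show ?thesis by (simp add: u_def algebra_simps)
    qed
    also have "\<dots> = x i"
    proof (cases "i < k")
      case True
      then show ?thesis using ep by (simp add: c_def)
    next
      case False
      then show ?thesis using x0 x by (simp add: Xs_def)
    qed
    finally show "x i = (\<Sum>v\<in>F. u v * v i)" by simp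
  qed
  ultimately show ?thesis unfolding F_def pt_def by (intro exI[of _ F] exI[of _ u]) (auto simp: F_def pt_def)
qed



lemma ofint_lt: "(x::int) < y \<Longrightarrow> real_of_int x \<le> real_of_int y - 1"
proof -
  assume "x < y" then have "x \<le> y - 1" by simp
  then have "real_of_int x \<le> real_of_int (y - 1)" by (simp only: of_int_le_iff)
  then show ?thesis by simp
qed

locale gzl =
  fixes n :: nat and lam :: "nat \<Rightarrow> int" and a :: "nat \<Rightarrow> nat \<Rightarrow> int"
    and E EL ER :: "nat \<Rightarrow> nat \<Rightarrow> bool"
  assumes part: "is_partition n lam"
    and enh: "is_enhanced_GZ n lam a E EL ER"
begin

lemma HT: "\<forall>j. 1 \<le> j \<and> j \<le> n \<longrightarrow> a 0 j = lam (n + 1 - j)"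
  using enh unfolding is_enhanced_GZ_def is_GZ_pattern_def by (elim conjE) assumption
lemma top: "1 \<le> j \<Longrightarrow> j \<le> n \<Longrightarrow> a 0 j = lam (n + 1 - j)"
  using HT by blast
lemma HE: "\<forall>i j. E i j \<longrightarrow> gz_pos n i j"
  using enh unfolding is_enhanced_GZ_def by (elim conjE) assumption
lemma HEL: "\<forall>i j. EL i j \<longrightarrow> 1 \<le> i \<and> gz_pos n i j"
  using enh unfolding is_enhanced_GZ_def by (elim conjE) assumption
lemma HER: "\<forall>i j. ER i j \<longrightarrow> 1 \<le> i \<and> gz_pos n i j"
  using enh unfolding is_enhanced_GZ_def by (elim conjE) assumption
lemma H1: "\<forall>j. gz_pos n 0 j \<longrightarrow> E 0 j"
  using enh unfolding is_enhanced_GZ_def by (elim conjE) assumption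
lemma Epos: "E i j \<Longrightarrow> gz_pos n i j" using HE by blast
lemma ELpos: "EL i j \<Longrightarrow> 1 \<le> i \<and> gz_pos n i j" using HEL by blast
lemma ERpos: "ER i j \<Longrightarrow> 1 \<le> i \<and> gz_pos n i j" using HER by blast
lemma r1: "gz_pos n 0 j \<Longrightarrow> E 0 j" using H1 by blast

lemma HP: "\<forall>i j. 1 \<le> i \<and> gz_pos n i j \<longrightarrow> a (i-1) j \<le> a i j \<and> a i j \<le> a (i-1) (j+1)"
  using enh unfolding is_enhanced_GZ_def is_GZ_pattern_def by (elim conjE) assumption
lemma inter: "gz_pos n (Suc i) j \<Longrightarrow> a i j \<le> a (Suc i) j \<and> a (Suc i) j \<le> a i (j+1)"
  using HP[rule_format, of "Suc i" j] by simp

lemma H2L: "\<forall>i j. EL i j \<longrightarrow> a i j = a (i-1) j \<and> E i j"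
  using enh unfolding is_enhanced_GZ_def by (elim conjE) assumption
lemma H2R: "\<forall>i j. ER i j \<longrightarrow> a i j = a (i-1) (j+1) \<and> E i j"
  using enh unfolding is_enhanced_GZ_def by (elim conjE) assumption
lemma H3: "\<forall>i j. 1 \<le> i \<and> gz_pos n i j \<and> gz_pos n i (j+1) \<longrightarrow>
        ((ER i j \<and> EL i (j+1)) \<longleftrightarrow> (EL (i+1) j \<and> ER (i+1) j))"
  using enh unfolding is_enhanced_GZ_def by (elim conjE) assumption
lemma H4: "\<forall>j. gz_pos n 0 j \<and> gz_pos n 0 (j+1) \<and> a 0 j = a 0 (j+1) \<longrightarrow>
        E 1 j \<and> EL 1 j \<and> ER 1 j"
  using enh unfolding is_enhanced_GZ_def by (elim conjE) assumption
lemma H5: "\<forall>i j. 1 \<le> i \<and> gz_pos n i j \<and> a (i-1) j < a (i-1) (j+1) \<and> a i j = a (i-1) j \<longrightarrow>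
        E i j \<and> EL i j"
  using enh unfolding is_enhanced_GZ_def by (elim conjE) assumption
lemma H6: "\<forall>i j. 1 \<le> i \<and> gz_pos n i j \<and> a (i-1) j < a (i-1) (j+1) \<and> a i j = a (i-1) (j+1) \<and> E i j \<longrightarrow>
        ER i j"
  using enh unfolding is_enhanced_GZ_def by (elim conjE) assumption
lemma H7: "\<forall>i j. 1 \<le> i \<and> gz_pos n i j \<and> a (i-1) j = a (i-1) (j+1) \<and> a i j = a (i-1) j \<and>
        gz_connected EL ER (i-1, j) (i-1, j+1) \<longrightarrow> E i j \<and> EL i j \<and> ER i j"
  using enh unfolding is_enhanced_GZ_def by (elim conjE) assumption
lemma H8: "\<forall>i j. 1 \<le> i \<and> gz_pos n i j \<and> a (i-1) j = a (i-1) (j+1) \<and> a i j = a (i-1) j \<and> E i j \<longrightarrow>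
        EL i j \<or> ER i j"
  using enh unfolding is_enhanced_GZ_def by (elim conjE) assumption

lemma r2L: "EL (Suc i) j \<Longrightarrow> a (Suc i) j = a i j \<and> E (Suc i) j"
  using H2L[rule_format, of "Suc i" j] by simp
lemma r2R: "ER (Suc i) j \<Longrightarrow> a (Suc i) j = a i (j+1) \<and> E (Suc i) j"
  using H2R[rule_format, of "Suc i" j] by simp
lemma r3: "gz_pos n (Suc i) j \<Longrightarrow> gz_pos n (Suc i) (j+1) \<Longrightarrow>
    (ER (Suc i) j \<and> EL (Suc i) (j+1)) = (EL (Suc (Suc i)) j \<and> ER (Suc (Suc i)) j)"
  using H3[rule_format, of "Suc i" j] by simp
lemma r4: "gz_pos n 0 j \<Longrightarrow> gz_pos n 0 (j+1) \<Longrightarrow> a 0 j = a 0 (j+1) \<Longrightarrow> E 1 j \<and> EL 1 j \<and> ER 1 j"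
  using H4 by blast
lemma r5: "gz_pos n (Suc i) j \<Longrightarrow> a i j < a i (j+1) \<Longrightarrow> a (Suc i) j = a i j \<Longrightarrow> E (Suc i) j \<and> EL (Suc i) j"
  using H5[rule_format, of "Suc i" j] by simp
lemma r6: "gz_pos n (Suc i) j \<Longrightarrow> a i j < a i (j+1) \<Longrightarrow> a (Suc i) j = a i (j+1) \<Longrightarrow> E (Suc i) j \<Longrightarrow> ER (Suc i) j"
  using H6[rule_format, of "Suc i" j] by simp
lemma r7: "gz_pos n (Suc i) j \<Longrightarrow> a i j = a i (j+1) \<Longrightarrow> a (Suc i) j = a i j \<Longrightarrow>
    gz_connected EL ER (i, j) (i, j+1) \<Longrightarrow> E (Suc i) j \<and> EL (Suc i) j \<and> ER (Suc i) j"
  using H7[rule_format, of "Suc i" j] by simp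
lemma r8: "gz_pos n (Suc i) j \<Longrightarrow> a i j = a i (j+1) \<Longrightarrow> a (Suc i) j = a i j \<Longrightarrow> E (Suc i) j \<Longrightarrow>
    EL (Suc i) j \<or> ER (Suc i) j"
  using H8[rule_format, of "Suc i" j] by simp


lemma conn2: "ER (Suc i) j \<Longrightarrow> EL (Suc i) (j+1) \<Longrightarrow> gz_connected EL ER (Suc i, j) (Suc i, j+1)"
proof -
  assume r: "ER (Suc i) j" and l: "EL (Suc i) (j+1)"
  have e1: "gz_edge EL ER (Suc i, j) (i, j+1)"
    unfolding gz_edge_def by (rule exI[of _ "Suc i"], rule exI[of _ j]) (simp add: r)
  have e2: "gz_edge EL ER (i, j+1) (Suc i, j+1)"
    unfolding gz_edge_def by (rule exI[of _ "Suc i"], rule exI[of _ "j+1"]) (use l in simp)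
  show ?thesis unfolding gz_connected_def
    using e1 e2 by (meson rtranclp.rtrancl_into_rtrancl rtranclp.rtrancl_refl)
qed

lemma conn0: "EL 1 j \<Longrightarrow> ER 1 j \<Longrightarrow> gz_connected EL ER (0, j) (0, j+1)"
proof -
  assume l: "EL 1 j" and r: "ER 1 j"
  have e1: "gz_edge EL ER (0, j) (1, j)"
    unfolding gz_edge_def by (rule exI[of _ 1], rule exI[of _ j]) (use l in simp)
  have e2: "gz_edge EL ER (1, j) (0, j+1)"
    unfolding gz_edge_def by (rule exI[of _ 1], rule exI[of _ j]) (use r in simp)
  show ?thesis unfolding gz_connected_def
    using e1 e2 by (meson rtranclp.rtrancl_into_rtrancl rtranclp.rtrancl_refl)
qed

lemma cons_gen:
  fixes F :: "nat \<Rightarrow> nat \<Rightarrow> 'b"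
  assumes F0: "\<And>j. F 0 j = B (lam (n + 1 - j))"
    and FL: "\<And>i j. EL (Suc i) j \<Longrightarrow> F (Suc i) j = F i j"
    and FR: "\<And>i j. \<not> EL (Suc i) j \<Longrightarrow> ER (Suc i) j \<Longrightarrow> F (Suc i) j = F i (j+1)"
  shows "gz_pos n (Suc i) j \<Longrightarrow> EL (Suc i) j \<Longrightarrow> ER (Suc i) j \<Longrightarrow> F i j = F i (j+1)"
proof (induction i arbitrary: j)
  case 0
  have "a 1 j = a 0 j" "a 1 j = a 0 (j+1)" using r2L[of 0 j] r2R[of 0 j] 0 by auto
  moreover have "a 0 j = lam (n + 1 - j)" by (rule top) (use 0 in \<open>auto simp: gz_pos_def\<close>)
  moreover have "a 0 (j+1) = lam (n + 1 - (j+1))" by (rule top) (use 0 in \<open>auto simp: gz_pos_def\<close>)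
  ultimately have "lam (n + 1 - j) = lam (n + 1 - (j+1))" by simp
  then show ?case by (simp add: F0)
next
  case (Suc i)
  have p1: "gz_pos n (Suc i) j" "gz_pos n (Suc i) (j+1)" using Suc.prems by (auto simp: gz_pos_def)
  have "ER (Suc i) j \<and> EL (Suc i) (j+1)" using r3[OF p1] Suc.prems by simp
  then have rr: "ER (Suc i) j" and ll: "EL (Suc i) (j+1)" by auto
  have A: "F (Suc i) (j+1) = F i (j+1)" using FL[OF ll] .
  show ?case
  proof (cases "EL (Suc i) j")
    case True
    then have "F (Suc i) j = F i j" by (rule FL)
    also have "\<dots> = F i (j+1)" using Suc.IH[OF p1(1) True rr] .
    finally show ?thesis using A by simp
  next
    case False
    then have "F (Suc i) j = F i (j+1)" using rr by (rule FR)
    then show ?thesis using A by simp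
  qed
qed

fun Yc :: "nat \<Rightarrow> nat \<Rightarrow> real" where
  "Yc 0 j = real_of_int (lam (n + 1 - j))"
| "Yc (Suc i) j = (if EL (Suc i) j then Yc i j else if ER (Suc i) j then Yc i (j+1)
     else if E (Suc i) j then real_of_int (a (Suc i) j)
     else (max (Yc i j) (real_of_int (a (Suc i) j) - 1) +
           (if a i (j+1) = a (Suc i) j then Yc i (j+1) else real_of_int (a (Suc i) j))) / 2)"

lemma Ycons: "gz_pos n (Suc i) j \<Longrightarrow> EL (Suc i) j \<Longrightarrow> ER (Suc i) j \<Longrightarrow> Yc i j = Yc i (j+1)"
  by (rule cons_gen[of Yc real_of_int]) auto

definition Inv :: "nat \<Rightarrow> bool" where
  "Inv i \<longleftrightarrow> (\<forall>j. gz_pos n i j \<longrightarrow> real_of_int (a i j) - 1 < Yc i j \<and> Yc i j \<le> real_of_int (a i j)) \<and>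
     (\<forall>j. gz_pos n i j \<and> gz_pos n i (j+1) \<and> a i j = a i (j+1) \<longrightarrow>
        gz_connected EL ER (i,j) (i,j+1) \<or> Yc i j < Yc i (j+1))"

definition hiv :: "nat \<Rightarrow> nat \<Rightarrow> real" where
  "hiv i j = (if a i (j+1) = a (Suc i) j then Yc i (j+1) else real_of_int (a (Suc i) j))"

lemma step:
  assumes inv: "Inv i" and pos: "gz_pos n (Suc i) j"
  shows "real_of_int (a (Suc i) j) - 1 < Yc (Suc i) j \<and> Yc (Suc i) j \<le> real_of_int (a (Suc i) j)"
    and "Yc i j \<le> Yc (Suc i) j \<and> Yc (Suc i) j \<le> Yc i (j+1)"
    and "(EL (Suc i) j \<or> Yc i j < Yc (Suc i) j) \<and> (ER (Suc i) j \<or> Yc (Suc i) j < Yc i (j+1))"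
    and "\<not> EL (Suc i) j \<and> \<not> ER (Suc i) j \<and> \<not> E (Suc i) j \<longrightarrow>
           max (Yc i j) (real_of_int (a (Suc i) j) - 1) < hiv i j"
proof -
  define v where "v = a (Suc i) j"
  define aL where "aL = a i j"
  define aR where "aR = a i (j+1)"
  have pL: "gz_pos n i j" and pR: "gz_pos n i (j+1)" using pos by (auto simp: gz_pos_def)
  have ord: "aL \<le> v" "v \<le> aR" using inter[OF pos] by (auto simp: v_def aL_def aR_def)
  have IL: "real_of_int aL - 1 < Yc i j" "Yc i j \<le> real_of_int aL"
    using inv pL by (auto simp: Inv_def aL_def)
  have IR: "real_of_int aR - 1 < Yc i (j+1)" "Yc i (j+1) \<le> real_of_int aR"
    using inv pR by (auto simp: Inv_def aR_def)
  have I2: "aL = aR \<Longrightarrow> gz_connected EL ER (i,j) (i,j+1) \<or> Yc i j < Yc i (j+1)"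
    using inv pL pR by (auto simp: Inv_def aL_def aR_def)
  have KL: "Yc i j < Yc i (j+1)" if "aL < aR \<or> (aL = aR \<and> \<not> (E (Suc i) j \<and> EL (Suc i) j \<and> ER (Suc i) j))"
  proof (cases "aL < aR")
    case True
    then have "real_of_int aL \<le> real_of_int aR - 1" by (rule ofint_lt)
    then show ?thesis using IL IR by linarith
  next
    case False
    then have eq: "aL = aR" and nn: "\<not> (E (Suc i) j \<and> EL (Suc i) j \<and> ER (Suc i) j)" using that by auto
    have "v = aL" using eq ord by simp
    then have "\<not> gz_connected EL ER (i,j) (i,j+1)"
      using r7[OF pos] eq nn by (auto simp: v_def aL_def aR_def)
    then show ?thesis using I2[OF eq] by simp
  qed
  have "(real_of_int v - 1 < Yc (Suc i) j \<and> Yc (Suc i) j \<le> real_of_int v) \<and>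
        (Yc i j \<le> Yc (Suc i) j \<and> Yc (Suc i) j \<le> Yc i (j+1)) \<and>
        ((EL (Suc i) j \<or> Yc i j < Yc (Suc i) j) \<and> (ER (Suc i) j \<or> Yc (Suc i) j < Yc i (j+1))) \<and>
        (\<not> EL (Suc i) j \<and> \<not> ER (Suc i) j \<and> \<not> E (Suc i) j \<longrightarrow>
           max (Yc i j) (real_of_int v - 1) < hiv i j)"
  proof (cases "EL (Suc i) j")
    case True
    have y: "Yc (Suc i) j = Yc i j" using True by simp
    have va: "v = aL" using r2L[OF True] by (simp add: v_def aL_def)
    have "ER (Suc i) j \<or> Yc i j < Yc i (j+1)"
    proof (cases "ER (Suc i) j")
      case False
      then show ?thesis using KL ord va by force
    qed simp
    moreover have "Yc i j \<le> Yc i (j+1)"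
      using calculation Ycons[OF pos True] by force
    ultimately show ?thesis using y va IL True by simp
  next
    case nEL: False
    show ?thesis
    proof (cases "ER (Suc i) j")
      case True
      have y: "Yc (Suc i) j = Yc i (j+1)" using True nEL by simp
      have va: "v = aR" using r2R[OF True] by (simp add: v_def aR_def)
      have "Yc i j < Yc i (j+1)" using KL ord va nEL by force
      then show ?thesis using y va IR True nEL by simp
    next
      case nER: False
      show ?thesis
      proof (cases "E (Suc i) j")
        case True
        have y: "Yc (Suc i) j = real_of_int v" using True nEL nER by (simp add: v_def)
        have l: "aL < v"
        proof (rule ccontr)
          assume "\<not> aL < v"
          then have eq: "aL = v" using ord by simp
          show False
          proof (cases "aL < aR")
            case True
            then show False using r5[OF pos] eq nEL by (simp add: v_def aL_def aR_def)
          next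
            case False
            then have "aL = aR" using ord by simp
            then show False using r8[OF pos] eq nEL nER \<open>E (Suc i) j\<close> by (simp add: v_def aL_def aR_def)
          qed
        qed
        have r: "v < aR"
        proof (rule ccontr)
          assume "\<not> v < aR"
          then have eq: "v = aR" using ord by simp
          show False
          proof (cases "aL < aR")
            case True
            then show False using r6[OF pos] eq nER \<open>E (Suc i) j\<close> by (simp add: v_def aL_def aR_def)
          next
            case False
            then have "aL = aR" using ord by simp
            then show False using r8[OF pos] eq nEL nER \<open>E (Suc i) j\<close> by (simp add: v_def aL_def aR_def)
          qed
        qed
        have "real_of_int aL \<le> real_of_int v - 1" using l by (rule ofint_lt)
        moreover have "real_of_int v \<le> real_of_int aR - 1" using r by (rule ofint_lt)
        ultimately show ?thesis using y IL IR True by auto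
      next
        case nE: False
        define mx where "mx = max (Yc i j) (real_of_int v - 1)"
        have hv: "hiv i j = (if aR = v then Yc i (j+1) else real_of_int v)"
          by (simp add: hiv_def aR_def v_def)
        have y: "Yc (Suc i) j = (mx + hiv i j) / 2"
          using nEL nER nE by (simp add: mx_def hiv_def v_def)
        have mh: "mx < hiv i j"
        proof (cases "aR = v")
          case True
          have "Yc i j < Yc i (j+1)"
          proof (cases "aL < aR")
            case True then show ?thesis using KL by simp
          next
            case False
            then have "aL = aR" using ord by simp
            then show ?thesis using KL nE by simp
          qed
          then show ?thesis using hv True IR by (simp add: mx_def)
        next
          case False
          have l: "aL < v"
          proof (rule ccontr)
            assume "\<not> aL < v"
            then have eq: "aL = v" using ord by simp
            then have "aL < aR" using False ord by simp
            then show False using r5[OF pos] eq nE by (simp add: v_def aL_def aR_def)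
          qed
          have "real_of_int aL \<le> real_of_int v - 1" using l by (rule ofint_lt)
          then show ?thesis using hv False IL by (simp add: mx_def)
        qed
        have hb: "hiv i j \<le> real_of_int v"
          using hv IR by (cases "aR = v") auto
        have hR: "hiv i j \<le> Yc i (j+1)"
        proof (cases "aR = v")
          case True then show ?thesis using hv by simp
        next
          case False
          then have "v < aR" using ord by simp
          then have "real_of_int v \<le> real_of_int aR - 1" by (rule ofint_lt)
          then show ?thesis using hv False IR by simp
        qed
        have "Yc i j \<le> mx" "real_of_int v - 1 \<le> mx" by (auto simp: mx_def)
        then show ?thesis using y mh hb hR nEL nER nE by (auto simp: mx_def[symmetric])
      qed
    qed
  qed
  then show "real_of_int (a (Suc i) j) - 1 < Yc (Suc i) j \<and> Yc (Suc i) j \<le> real_of_int (a (Suc i) j)"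
    and "Yc i j \<le> Yc (Suc i) j \<and> Yc (Suc i) j \<le> Yc i (j+1)"
    and "(EL (Suc i) j \<or> Yc i j < Yc (Suc i) j) \<and> (ER (Suc i) j \<or> Yc (Suc i) j < Yc i (j+1))"
    and "\<not> EL (Suc i) j \<and> \<not> ER (Suc i) j \<and> \<not> E (Suc i) j \<longrightarrow>
           max (Yc i j) (real_of_int (a (Suc i) j) - 1) < hiv i j"
    by (simp_all add: v_def)
qed

lemma Inv0: "Inv 0"
  unfolding Inv_def
proof (intro conjI allI impI)
  fix j assume "gz_pos n 0 j"
  then have "a 0 j = lam (n + 1 - j)" by (intro top) (auto simp: gz_pos_def)
  then show "real_of_int (a 0 j) - 1 < Yc 0 j" "Yc 0 j \<le> real_of_int (a 0 j)" by simp_all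
next
  fix j assume "gz_pos n 0 j \<and> gz_pos n 0 (j + 1) \<and> a 0 j = a 0 (j + 1)"
  then have "EL 1 j" "ER 1 j" using r4 by auto
  then show "gz_connected EL ER (0, j) (0, j + 1) \<or> Yc 0 j < Yc 0 (j + 1)" using conn0 by simp
qed

lemma Inv_Suc: "Inv i \<Longrightarrow> Inv (Suc i)"
proof -
  assume inv: "Inv i"
  show "Inv (Suc i)"
    unfolding Inv_def
  proof (intro conjI allI impI)
    fix j assume "gz_pos n (Suc i) j"
    then show "real_of_int (a (Suc i) j) - 1 < Yc (Suc i) j" "Yc (Suc i) j \<le> real_of_int (a (Suc i) j)"
      using step(1)[OF inv] by auto
  next
    fix j assume h: "gz_pos n (Suc i) j \<and> gz_pos n (Suc i) (j + 1) \<and> a (Suc i) j = a (Suc i) (j + 1)"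
    have A: "ER (Suc i) j \<or> Yc (Suc i) j < Yc i (j+1)" "Yc (Suc i) j \<le> Yc i (j+1)"
      using step(2,3)[OF inv] h by auto
    have B: "EL (Suc i) (j+1) \<or> Yc i (j+1) < Yc (Suc i) (j+1)" "Yc i (j+1) \<le> Yc (Suc i) (j+1)"
      using step(2,3)[OF inv, of "j+1"] h by auto
    show "gz_connected EL ER (Suc i, j) (Suc i, j + 1) \<or> Yc (Suc i) j < Yc (Suc i) (j + 1)"
    proof (cases "ER (Suc i) j \<and> EL (Suc i) (j+1)")
      case True then show ?thesis using conn2 by simp
    next
      case False
      then have "\<not> ER (Suc i) j \<or> \<not> EL (Suc i) (j+1)" by blast
      then have "Yc (Suc i) j < Yc (Suc i) (j + 1)"
      proof
        assume "\<not> ER (Suc i) j"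
        then have "Yc (Suc i) j < Yc i (j+1)" using A(1) by blast
        then show ?thesis using B(2) by linarith
      next
        assume "\<not> EL (Suc i) (j+1)"
        then have "Yc i (j+1) < Yc (Suc i) (j+1)" using B(1) by blast
        then show ?thesis using A(2) by linarith
      qed
      then show ?thesis by blast
    qed
  qed
qed

lemma Inv_all: "Inv i"
  by (induction i) (auto intro: Inv0 Inv_Suc)

lemmas stepA = step[OF Inv_all]

end



context gzl
begin

definition Fr :: "(nat \<times> nat) set" where
  "Fr = {(i,j). 1 \<le> i \<and> gz_pos n i j \<and> \<not> E i j}"

lemma Fr_finite: "finite Fr"
proof -
  have "Fr \<subseteq> {0..n} \<times> {0..n}" by (auto simp: Fr_def gz_pos_def)
  then show ?thesis by (rule finite_subset) simp
qed

definition kk :: nat where "kk = card Fr"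

definition enum :: "nat \<Rightarrow> nat \<times> nat" where
  "enum = (SOME h. bij_betw h {..<kk} Fr)"

lemma enum_bij: "bij_betw enum {..<kk} Fr"
proof -
  have "\<exists>h. bij_betw h {..<kk} Fr"
    using ex_bij_betw_nat_finite[OF Fr_finite] by (simp add: kk_def atLeast0LessThan)
  then show ?thesis unfolding enum_def by (rule someI_ex)
qed

definition idx :: "nat \<times> nat \<Rightarrow> nat" where
  "idx = the_inv_into {..<kk} enum"

lemma enum_in: "m < kk \<Longrightarrow> enum m \<in> Fr"
  using enum_bij by (auto simp: bij_betw_def)

lemma idx_enum: "m < kk \<Longrightarrow> idx (enum m) = m"
  using enum_bij unfolding idx_def bij_betw_def by (simp add: the_inv_into_f_f)

lemma idx_lt: "p \<in> Fr \<Longrightarrow> idx p < kk"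
  using enum_bij unfolding idx_def bij_betw_def
  by (metis lessThan_iff the_inv_into_into subset_refl)

lemma enum_idx: "p \<in> Fr \<Longrightarrow> enum (idx p) = p"
  using enum_bij unfolding idx_def bij_betw_def by (simp add: f_the_inv_into_f)

lemma Fr_Suc: "(Suc i, j) \<in> Fr \<longleftrightarrow> gz_pos n (Suc i) j \<and> \<not> E (Suc i) j"
  by (simp add: Fr_def)

lemma Fr_form: "p \<in> Fr \<Longrightarrow> \<exists>i j. p = (Suc i, j)"
proof -
  assume "p \<in> Fr"
  obtain i' j where p: "p = (i', j)" by (cases p)
  then have "1 \<le> i'" using \<open>p \<in> Fr\<close> by (simp add: Fr_def)
  then have "i' = Suc (i' - 1)" by simp
  then show ?thesis using p by blast
qed

lemma Fr_noedge: "(Suc i, j) \<in> Fr \<Longrightarrow> \<not> EL (Suc i) j \<and> \<not> ER (Suc i) j"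
  using r2L r2R by (auto simp: Fr_def)

fun Tm :: "nat \<Rightarrow> nat \<Rightarrow> real \<times> (nat \<Rightarrow> real)" where
  "Tm 0 j = cst (real_of_int (lam (n + 1 - j)))"
| "Tm (Suc i) j = (if EL (Suc i) j then Tm i j else if ER (Suc i) j then Tm i (j+1)
     else if E (Suc i) j then cst (real_of_int (a (Suc i) j))
     else (0, \<lambda>m. if m = idx (Suc i, j) then 1 else 0))"

declare Tm.simps(2)[simp del]

lemma Tm_EL: "EL (Suc i) j \<Longrightarrow> Tm (Suc i) j = Tm i j" by (simp add: Tm.simps)
lemma Tm_ER: "\<not> EL (Suc i) j \<Longrightarrow> ER (Suc i) j \<Longrightarrow> Tm (Suc i) j = Tm i (j+1)" by (simp add: Tm.simps)
lemma Tm_E: "\<not> EL (Suc i) j \<Longrightarrow> \<not> ER (Suc i) j \<Longrightarrow> E (Suc i) j \<Longrightarrow> Tm (Suc i) j = cst (real_of_int (a (Suc i) j))"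
  by (simp add: Tm.simps)
lemma Tm_F: "\<not> EL (Suc i) j \<Longrightarrow> \<not> ER (Suc i) j \<Longrightarrow> \<not> E (Suc i) j \<Longrightarrow>
    Tm (Suc i) j = (0, \<lambda>m. if m = idx (Suc i, j) then 1 else 0)"
  by (simp add: Tm.simps)

lemma Tcons: "gz_pos n (Suc i) j \<Longrightarrow> EL (Suc i) j \<Longrightarrow> ER (Suc i) j \<Longrightarrow> Tm i j = Tm i (j+1)"
  by (rule cons_gen[of Tm "\<lambda>c. cst (real_of_int c)"]) (auto simp: Tm_EL Tm_ER)

lemma aff_free: "(Suc i, j) \<in> Fr \<Longrightarrow> aff kk (Tm (Suc i) j) x = x (idx (Suc i, j))"
proof -
  assume F: "(Suc i, j) \<in> Fr"
  then have "\<not> EL (Suc i) j" "\<not> ER (Suc i) j" "\<not> E (Suc i) j" using Fr_noedge by (auto simp: Fr_def)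
  then have "Tm (Suc i) j = (0, \<lambda>m. if m = idx (Suc i, j) then 1 else 0)" by (rule Tm_F)
  moreover have "idx (Suc i, j) < kk" using idx_lt[OF F] .
  moreover have "(\<Sum>m<kk. (if m = idx (Suc i, j) then 1 else 0) * x m) = (\<Sum>m<kk. if m = idx (Suc i, j) then x m else 0)"
    by (rule sum.cong) auto
  ultimately show ?thesis by (simp add: aff_def lin_def)
qed

definition Phi :: "(nat \<Rightarrow> real) \<Rightarrow> (nat \<times> nat \<Rightarrow> real)" where
  "Phi x = (\<lambda>p. if p \<in> gz_coords n then aff kk (Tm (fst p) (snd p)) x else 0)"

definition Psi :: "(nat \<times> nat \<Rightarrow> real) \<Rightarrow> (nat \<Rightarrow> real)" where
  "Psi y = (\<lambda>m. if m < kk then y (enum m) else 0)"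

lemma Fr_coords: "p \<in> Fr \<Longrightarrow> p \<in> gz_coords n"
  by (auto simp: Fr_def gz_coords_def gz_pos_def)

lemma Phi_coord: "1 \<le> i \<Longrightarrow> gz_pos n i j \<Longrightarrow> Phi x (i,j) = aff kk (Tm i j) x"
  by (simp add: Phi_def gz_coords_def gz_pos_def)

lemma yext_Phi: "gz_pos n i j \<Longrightarrow> yext n lam (Phi x) i j = aff kk (Tm i j) x"
  by (cases i) (auto simp: yext_def Phi_coord)

lemma Phi_space: "Phi x \<in> gz_space n"
  by (simp add: gz_space_def Phi_def)

lemma Psi_Xs: "Psi y \<in> Xs kk"
  by (simp add: Psi_def Xs_def)

lemma Psi_Phi: "x \<in> Xs kk \<Longrightarrow> Psi (Phi x) = x"
proof
  fix m assume x: "x \<in> Xs kk"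
  show "Psi (Phi x) m = x m"
  proof (cases "m < kk")
    case True
    then have F: "enum m \<in> Fr" by (rule enum_in)
    then obtain i j where e: "enum m = (Suc i, j)" using Fr_form by blast
    have F': "(Suc i, j) \<in> Fr" using F e by simp
    then have pos: "gz_pos n (Suc i) j" by (simp add: Fr_def)
    have "Phi x (enum m) = aff kk (Tm (Suc i) j) x"
      unfolding e by (rule Phi_coord) (simp_all add: pos)
    also have "\<dots> = x (idx (Suc i, j))" using F' by (rule aff_free)
    also have "\<dots> = x m" using idx_enum[OF True] e by simp
    finally show ?thesis using True by (simp add: Psi_def)
  next
    case False then show ?thesis using x by (simp add: Psi_def Xs_def)
  qed
qed

lemma cont_Phi: "continuous_on S Phi"
  unfolding Phi_def
proof (rule continuous_on_coordinatewise_then_product)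
  fix p show "continuous_on S (\<lambda>x. if p \<in> gz_coords n then aff kk (Tm (fst p) (snd p)) x else 0)"
    by (cases "p \<in> gz_coords n") (auto intro: cont_aff)
qed

lemma cont_Psi: "continuous_on S Psi"
  unfolding Psi_def
proof (rule continuous_on_coordinatewise_then_product)
  fix m show "continuous_on S (\<lambda>y. if m < kk then y (enum m) else 0)"
    by (cases "m < kk") (auto intro: cont_coord)
qed

definition L0 where "L0 = Phi ` Xs kk"

lemma hom_PhiPsi: "homeomorphism (Xs kk) L0 Phi Psi"
proof (rule homeomorphismI)
  show "continuous_on (Xs kk) Phi" by (rule cont_Phi)
  show "continuous_on L0 Psi" by (rule cont_Psi)
  show "Phi ` Xs kk \<subseteq> L0" by (simp add: L0_def)
  show "Psi ` L0 \<subseteq> Xs kk" using Psi_Xs by blast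
  show "Psi (Phi x) = x" if "x \<in> Xs kk" for x using that by (rule Psi_Phi)
  show "Phi (Psi y) = y" if y: "y \<in> L0" for y
  proof -
    obtain x where "x \<in> Xs kk" "y = Phi x" using y unfolding L0_def by blast
    then show ?thesis by (simp add: Psi_Phi)
  qed
qed

lemma Phi_inj: "inj_on Phi (Xs kk)"
  by (rule inj_on_inverseI[where g=Psi]) (rule Psi_Phi)


lemma allSuc: "(\<forall>i j. 1 \<le> i \<and> Q i j \<longrightarrow> P i j) \<longleftrightarrow> (\<forall>i j. Q (Suc i) j \<longrightarrow> P (Suc i) j)"
proof
  assume L: "\<forall>i j. 1 \<le> i \<and> Q i j \<longrightarrow> P i j"
  show "\<forall>i j. Q (Suc i) j \<longrightarrow> P (Suc i) j" using L by simp
next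
  assume R: "\<forall>i j. Q (Suc i) j \<longrightarrow> P (Suc i) j"
  show "\<forall>i j. 1 \<le> i \<and> Q i j \<longrightarrow> P i j"
  proof (intro allI impI)
    fix i j assume h: "1 \<le> i \<and> Q i j"
    then obtain i' where "i = Suc i'" by (metis not0_implies_Suc not_one_le_zero)
    then show "P i j" using R h by simp
  qed
qed

definition lowf :: "nat \<Rightarrow> nat \<Rightarrow> real \<times> (nat \<Rightarrow> real)" where
  "lowf i j = (if a (Suc i) j - a i j \<ge> 2 then dif (Tm (Suc i) j) (cst (real_of_int (a (Suc i) j) - 1))
               else dif (Tm (Suc i) j) (Tm i j))"
definition upf :: "nat \<Rightarrow> nat \<Rightarrow> real \<times> (nat \<Rightarrow> real)" where
  "upf i j = (if a i (j+1) = a (Suc i) j then dif (Tm i (j+1)) (Tm (Suc i) j)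
              else dif (cst (real_of_int (a (Suc i) j))) (Tm (Suc i) j))"
definition ChS :: "(real \<times> (nat \<Rightarrow> real)) set" where
  "ChS = (\<lambda>p. lowf (fst p - 1) (snd p)) ` Fr \<union> (\<lambda>p. upf (fst p - 1) (snd p)) ` Fr"
definition GP :: "(nat \<times> nat) set" where
  "GP = {(i,j). gz_pos n (Suc i) j}"
definition GZS :: "(real \<times> (nat \<Rightarrow> real)) set" where
  "GZS = (\<lambda>(i,j). dif (Tm (Suc i) j) (Tm i j)) ` GP \<union> (\<lambda>(i,j). dif (Tm i (j+1)) (Tm (Suc i) j)) ` GP"

lemma GP_finite: "finite GP"
proof -
  have "GP \<subseteq> {0..n} \<times> {0..n}" by (auto simp: GP_def gz_pos_def)
  then show ?thesis by (rule finite_subset) simp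
qed

lemma ChS_finite: "finite ChS" by (simp add: ChS_def Fr_finite)
lemma GZS_finite: "finite GZS" by (simp add: GZS_def GP_finite)

lemma ChS_mem: "(Suc i, j) \<in> Fr \<Longrightarrow> lowf i j \<in> ChS \<and> upf i j \<in> ChS"
proof
  assume F: "(Suc i, j) \<in> Fr"
  show "lowf i j \<in> ChS" unfolding ChS_def
    by (rule UnI1, rule image_eqI[where x="(Suc i, j)"]) (simp_all add: F)
  show "upf i j \<in> ChS" unfolding ChS_def
    by (rule UnI2, rule image_eqI[where x="(Suc i, j)"]) (simp_all add: F)
qed

lemma GZ_char:
  assumes x: "x \<in> Xs kk"
  shows "Phi x \<in> GZ_polytope n lam \<longleftrightarrow> (\<forall>g\<in>GZS. aff kk g x \<ge> 0)"
proof -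
  have "Phi x \<in> GZ_polytope n lam \<longleftrightarrow>
      (\<forall>i j. gz_pos n (Suc i) j \<longrightarrow>
         yext n lam (Phi x) i j \<le> Phi x (Suc i, j) \<and> Phi x (Suc i, j) \<le> yext n lam (Phi x) i (j+1))"
    unfolding GZ_polytope_def using Phi_space
    by (simp only: mem_Collect_eq simp_thms allSuc[of "\<lambda>i j. gz_pos n i j"] diff_Suc_1)
  also have "\<dots> \<longleftrightarrow> (\<forall>i j. gz_pos n (Suc i) j \<longrightarrow>
         aff kk (Tm i j) x \<le> aff kk (Tm (Suc i) j) x \<and> aff kk (Tm (Suc i) j) x \<le> aff kk (Tm i (j+1)) x)"
  proof -
    have "(yext n lam (Phi x) i j \<le> Phi x (Suc i, j) \<and> Phi x (Suc i, j) \<le> yext n lam (Phi x) i (j+1))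
       \<longleftrightarrow> (aff kk (Tm i j) x \<le> aff kk (Tm (Suc i) j) x \<and> aff kk (Tm (Suc i) j) x \<le> aff kk (Tm i (j+1)) x)"
       if pos: "gz_pos n (Suc i) j" for i j
    proof -
      have "yext n lam (Phi x) i j = aff kk (Tm i j) x" by (rule yext_Phi) (use pos in \<open>simp add: gz_pos_def\<close>)
      moreover have "Phi x (Suc i, j) = aff kk (Tm (Suc i) j) x" by (rule Phi_coord) (simp_all add: pos)
      moreover have "yext n lam (Phi x) i (j+1) = aff kk (Tm i (j+1)) x" by (rule yext_Phi) (use pos in \<open>simp add: gz_pos_def\<close>)
      ultimately show ?thesis by simp
    qed
    then show ?thesis by blast
  qed
  also have "\<dots> \<longleftrightarrow> (\<forall>g\<in>GZS. aff kk g x \<ge> 0)"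
  proof
    assume A: "\<forall>i j. gz_pos n (Suc i) j \<longrightarrow>
         aff kk (Tm i j) x \<le> aff kk (Tm (Suc i) j) x \<and> aff kk (Tm (Suc i) j) x \<le> aff kk (Tm i (j+1)) x"
    show "\<forall>g\<in>GZS. aff kk g x \<ge> 0" unfolding GZS_def GP_def using A by auto
  next
    assume B: "\<forall>g\<in>GZS. aff kk g x \<ge> 0"
    show "\<forall>i j. gz_pos n (Suc i) j \<longrightarrow>
         aff kk (Tm i j) x \<le> aff kk (Tm (Suc i) j) x \<and> aff kk (Tm (Suc i) j) x \<le> aff kk (Tm i (j+1)) x"
    proof (intro allI impI)
      fix i j assume pos: "gz_pos n (Suc i) j"
      have "dif (Tm (Suc i) j) (Tm i j) \<in> GZS"
        unfolding GZS_def by (rule UnI1, rule image_eqI[where x="(i,j)"]) (simp_all add: GP_def pos)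
      moreover have "dif (Tm i (j+1)) (Tm (Suc i) j) \<in> GZS"
        unfolding GZS_def by (rule UnI2, rule image_eqI[where x="(i,j)"]) (simp_all add: GP_def pos)
      ultimately
      have "aff kk (dif (Tm (Suc i) j) (Tm i j)) x \<ge> 0" "aff kk (dif (Tm i (j+1)) (Tm (Suc i) j)) x \<ge> 0"
        using B by blast+
      then show "aff kk (Tm i j) x \<le> aff kk (Tm (Suc i) j) x \<and> aff kk (Tm (Suc i) j) x \<le> aff kk (Tm i (j+1)) x"
        by simp
    qed
  qed
  finally show ?thesis .
qed

lemma Ch_sup: "Phi ` {x \<in> Xs kk. \<forall>g\<in>ChS. aff kk g x > 0} \<subseteq> cell_hat n lam a E EL ER"
proof
  fix y assume "y \<in> Phi ` {x \<in> Xs kk. \<forall>g\<in>ChS. aff kk g x > 0}"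
  then obtain x where x: "x \<in> Xs kk" "\<forall>g\<in>ChS. aff kk g x > 0" and y: "y = Phi x" by auto
  have C: "(EL (Suc i) j \<longrightarrow> y (Suc i, j) = yext n lam y i j) \<and>
      (ER (Suc i) j \<longrightarrow> y (Suc i, j) = yext n lam y i (j+1)) \<and>
      (\<not> EL (Suc i) j \<and> \<not> ER (Suc i) j \<and> E (Suc i) j \<longrightarrow> y (Suc i, j) = real_of_int (a (Suc i) j)) \<and>
      (\<not> EL (Suc i) j \<and> \<not> ER (Suc i) j \<and> \<not> E (Suc i) j \<longrightarrow>
         (if a (Suc i) j - a i j \<ge> 2 then real_of_int (a (Suc i) j) - 1 < y (Suc i, j)
          else yext n lam y i j < y (Suc i, j)) \<and>
         (if a i (j+1) = a (Suc i) j then y (Suc i, j) < yext n lam y i (j+1)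
          else y (Suc i, j) < real_of_int (a (Suc i) j)))"
    if pos: "gz_pos n (Suc i) j" for i j
  proof -
    have yv: "y (Suc i, j) = aff kk (Tm (Suc i) j) x" unfolding y by (rule Phi_coord) (simp_all add: pos)
    have yL: "yext n lam y i j = aff kk (Tm i j) x" unfolding y by (rule yext_Phi) (use pos in \<open>simp add: gz_pos_def\<close>)
    have yR: "yext n lam y i (j+1) = aff kk (Tm i (j+1)) x" unfolding y by (rule yext_Phi) (use pos in \<open>simp add: gz_pos_def\<close>)
    show ?thesis
    proof (cases "EL (Suc i) j")
      case True
      have 1: "y (Suc i, j) = yext n lam y i j" using yv yL Tm_EL[OF True] by simp
      have "ER (Suc i) j \<longrightarrow> y (Suc i, j) = yext n lam y i (j+1)"
        using 1 yL yR Tcons[OF pos True] by simp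
      then show ?thesis using 1 True by simp
    next
      case nL: False
      show ?thesis
      proof (cases "ER (Suc i) j")
        case True
        have "y (Suc i, j) = yext n lam y i (j+1)" using yv yR Tm_ER[OF nL True] by simp
        then show ?thesis using nL True by simp
      next
        case nR: False
        show ?thesis
        proof (cases "E (Suc i) j")
          case True
          have "y (Suc i, j) = real_of_int (a (Suc i) j)" using yv Tm_E[OF nL nR True] by simp
          then show ?thesis using nL nR True by simp
        next
          case nE: False
          have F: "(Suc i, j) \<in> Fr" using pos nE by (simp add: Fr_def)
          have l: "aff kk (lowf i j) x > 0" and u: "aff kk (upf i j) x > 0" using ChS_mem[OF F] x(2) by auto
          have "(if a (Suc i) j - a i j \<ge> 2 then real_of_int (a (Suc i) j) - 1 < y (Suc i, j)
                else yext n lam y i j < y (Suc i, j))"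
            using l yv yL by (simp add: lowf_def split: if_splits)
          moreover have "(if a i (j+1) = a (Suc i) j then y (Suc i, j) < yext n lam y i (j+1)
                else y (Suc i, j) < real_of_int (a (Suc i) j))"
            using u yv yR by (simp add: upf_def split: if_splits)
          ultimately show ?thesis using nL nR nE by simp
        qed
      qed
    qed
  qed
  have H: "\<forall>i j. 1 \<le> i \<and> gz_pos n i j \<longrightarrow>
      (EL i j \<longrightarrow> y (i,j) = yext n lam y (i-1) j) \<and>
      (ER i j \<longrightarrow> y (i,j) = yext n lam y (i-1) (j+1)) \<and>
      (\<not> EL i j \<and> \<not> ER i j \<and> E i j \<longrightarrow> y (i,j) = real_of_int (a i j)) \<and>
      (\<not> EL i j \<and> \<not> ER i j \<and> \<not> E i j \<longrightarrow>
         (if a i j - a (i-1) j \<ge> 2 then real_of_int (a i j) - 1 < y (i,j)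
          else yext n lam y (i-1) j < y (i,j)) \<and>
         (if a (i-1) (j+1) = a i j then y (i,j) < yext n lam y (i-1) (j+1)
          else y (i,j) < real_of_int (a i j)))"
    apply (subst allSuc[of "\<lambda>i j. gz_pos n i j"])
    apply (simp only: diff_Suc_1)
    apply (intro allI impI)
    apply (erule C)
    done
  have gzs: "y \<in> gz_space n" using y Phi_space by simp
  show "y \<in> cell_hat n lam a E EL ER" unfolding cell_hat_def mem_Collect_eq by (rule conjI[OF gzs H])
qed


lemma Ch_sub: "cell_hat n lam a E EL ER \<subseteq> Phi ` {x \<in> Xs kk. \<forall>g\<in>ChS. aff kk g x > 0}"
proof
  fix y assume yC: "y \<in> cell_hat n lam a E EL ER"
  have gzs: "y \<in> gz_space n" using yC unfolding cell_hat_def by blast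
  have H: "\<forall>i j. 1 \<le> i \<and> gz_pos n i j \<longrightarrow>
      (EL i j \<longrightarrow> y (i,j) = yext n lam y (i-1) j) \<and>
      (ER i j \<longrightarrow> y (i,j) = yext n lam y (i-1) (j+1)) \<and>
      (\<not> EL i j \<and> \<not> ER i j \<and> E i j \<longrightarrow> y (i,j) = real_of_int (a i j)) \<and>
      (\<not> EL i j \<and> \<not> ER i j \<and> \<not> E i j \<longrightarrow>
         (if a i j - a (i-1) j \<ge> 2 then real_of_int (a i j) - 1 < y (i,j)
          else yext n lam y (i-1) j < y (i,j)) \<and>
         (if a (i-1) (j+1) = a i j then y (i,j) < yext n lam y (i-1) (j+1)
          else y (i,j) < real_of_int (a i j)))"
    using yC unfolding cell_hat_def mem_Collect_eq by (elim conjE) assumption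
  have C: "(EL (Suc i) j \<longrightarrow> y (Suc i, j) = yext n lam y i j) \<and>
      (ER (Suc i) j \<longrightarrow> y (Suc i, j) = yext n lam y i (j+1)) \<and>
      (\<not> EL (Suc i) j \<and> \<not> ER (Suc i) j \<and> E (Suc i) j \<longrightarrow> y (Suc i, j) = real_of_int (a (Suc i) j)) \<and>
      (\<not> EL (Suc i) j \<and> \<not> ER (Suc i) j \<and> \<not> E (Suc i) j \<longrightarrow>
         (if a (Suc i) j - a i j \<ge> 2 then real_of_int (a (Suc i) j) - 1 < y (Suc i, j)
          else yext n lam y i j < y (Suc i, j)) \<and>
         (if a i (j+1) = a (Suc i) j then y (Suc i, j) < yext n lam y i (j+1)
          else y (Suc i, j) < real_of_int (a (Suc i) j)))"
    if pos: "gz_pos n (Suc i) j" for i j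
  proof -
    have "1 \<le> Suc i" by simp
    from H[rule_format, OF conjI[OF this pos]] show ?thesis unfolding diff_Suc_1 .
  qed
  define x where "x = Psi y"
  have xX: "x \<in> Xs kk" by (simp add: x_def Psi_Xs)
  have Y: "\<forall>j. gz_pos n i j \<longrightarrow> yext n lam y i j = aff kk (Tm i j) x" for i
  proof (induction i)
    case 0 then show ?case by (simp add: yext_def)
  next
    case (Suc i)
    show ?case
    proof (intro allI impI)
      fix j assume pos: "gz_pos n (Suc i) j"
      note CC = C[OF pos]
      have pL: "gz_pos n i j" and pR: "gz_pos n i (j+1)" using pos by (auto simp: gz_pos_def)
      have IL: "yext n lam y i j = aff kk (Tm i j) x" using Suc.IH pL by blast
      have IR: "yext n lam y i (j+1) = aff kk (Tm i (j+1)) x" using Suc.IH pR by blast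
      have yS: "yext n lam y (Suc i) j = y (Suc i, j)" by (simp add: yext_def)
      show "yext n lam y (Suc i) j = aff kk (Tm (Suc i) j) x"
      proof (cases "EL (Suc i) j")
        case True then show ?thesis using CC yS IL Tm_EL[OF True] by simp
      next
        case nL: False
        show ?thesis
        proof (cases "ER (Suc i) j")
          case True then show ?thesis using CC yS IR Tm_ER[OF nL True] by simp
        next
          case nR: False
          show ?thesis
          proof (cases "E (Suc i) j")
            case True then show ?thesis using CC yS Tm_E[OF nL nR True] nL nR by simp
          next
            case nE: False
            have F: "(Suc i, j) \<in> Fr" using pos nE by (simp add: Fr_def)
            have "aff kk (Tm (Suc i) j) x = x (idx (Suc i, j))" using F by (rule aff_free)
            also have "\<dots> = y (enum (idx (Suc i, j)))" using idx_lt[OF F] by (simp add: x_def Psi_def)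
            also have "\<dots> = y (Suc i, j)" using enum_idx[OF F] by simp
            finally show ?thesis using yS by simp
          qed
        qed
      qed
    qed
  qed
  have yP: "y = Phi x"
  proof
    fix p :: "nat \<times> nat"
    obtain i' j where p: "p = (i', j)" by (cases p)
    show "y p = Phi x p"
    proof (cases "p \<in> gz_coords n")
      case True
      then have "1 \<le> i'" using p by (simp add: gz_coords_def)
      then obtain i where i: "i' = Suc i" by (metis not0_implies_Suc not_one_le_zero)
      have pos: "gz_pos n (Suc i) j" using True p i by (simp add: gz_coords_def gz_pos_def)
      have "y (Suc i, j) = yext n lam y (Suc i) j" by (simp add: yext_def)
      also have "\<dots> = aff kk (Tm (Suc i) j) x" using Y pos by blast
      also have "\<dots> = Phi x (Suc i, j)" by (rule Phi_coord[symmetric]) (simp_all add: pos)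
      finally show ?thesis using p i by simp
    next
      case False
      then have "y p = 0" using gzs unfolding gz_space_def by blast
      then show ?thesis using False by (simp add: Phi_def)
    qed
  qed
  have pos_ok: "\<forall>g\<in>ChS. aff kk g x > 0"
  proof
    fix g assume g: "g \<in> ChS"
    then obtain p where pF: "p \<in> Fr" and gp: "g = lowf (fst p - 1) (snd p) \<or> g = upf (fst p - 1) (snd p)"
      unfolding ChS_def by blast
    then obtain i j where p: "p = (Suc i, j)" using Fr_form by blast
    have F: "(Suc i, j) \<in> Fr" using pF p by simp
    have pos: "gz_pos n (Suc i) j" and nE: "\<not> E (Suc i) j" using F by (auto simp: Fr_def)
    have ne: "\<not> EL (Suc i) j" "\<not> ER (Suc i) j" using Fr_noedge[OF F] by auto
    note CC = C[OF pos]
    have pL: "gz_pos n i j" and pR: "gz_pos n i (j+1)" using pos by (auto simp: gz_pos_def)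
    have IL: "yext n lam y i j = aff kk (Tm i j) x" using Y pL by blast
    have IR: "yext n lam y i (j+1) = aff kk (Tm i (j+1)) x" using Y pR by blast
    have "yext n lam y (Suc i) j = aff kk (Tm (Suc i) j) x" using Y pos by blast
    then have IS: "y (Suc i, j) = aff kk (Tm (Suc i) j) x" by (simp add: yext_def)
    have c1: "(if a (Suc i) j - a i j \<ge> 2 then real_of_int (a (Suc i) j) - 1 < y (Suc i, j)
          else yext n lam y i j < y (Suc i, j))"
     and c2: "(if a i (j+1) = a (Suc i) j then y (Suc i, j) < yext n lam y i (j+1)
          else y (Suc i, j) < real_of_int (a (Suc i) j))"
      using CC ne nE by blast+
    have "aff kk (lowf i j) x > 0" using c1 IL IS by (simp add: lowf_def split: if_splits)
    moreover have "aff kk (upf i j) x > 0" using c2 IR IS by (simp add: upf_def split: if_splits)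
    ultimately show "aff kk g x > 0" using gp p by auto
  qed
  show "y \<in> Phi ` {x \<in> Xs kk. \<forall>g\<in>ChS. aff kk g x > 0}"
    using yP xX pos_ok by blast
qed

lemma Ch_char: "cell_hat n lam a E EL ER = Phi ` {x \<in> Xs kk. \<forall>g\<in>ChS. aff kk g x > 0}"
  using Ch_sub Ch_sup by blast


lemma aff_comb:
  assumes "finite F" "sum u F = 1"
  shows "aff k g (\<lambda>i. \<Sum>v\<in>F. u v * v i) = (\<Sum>v\<in>F. u v * aff k g v)"
proof -
  have "lin k (snd g) (\<lambda>i. \<Sum>v\<in>F. u v * v i) = (\<Sum>i<k. \<Sum>v\<in>F. snd g i * (u v * v i))"
    by (simp add: lin_def sum_distrib_left)
  also have "\<dots> = (\<Sum>v\<in>F. \<Sum>i<k. snd g i * (u v * v i))" by (rule sum.swap)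
  also have "\<dots> = (\<Sum>v\<in>F. u v * lin k (snd g) v)"
    by (simp add: lin_def sum_distrib_left algebra_simps)
  finally have 1: "lin k (snd g) (\<lambda>i. \<Sum>v\<in>F. u v * v i) = (\<Sum>v\<in>F. u v * lin k (snd g) v)" .
  have 2: "fst g = (\<Sum>v\<in>F. u v * fst g)" using assms(2) by (simp add: sum_distrib_right[symmetric])
  show ?thesis unfolding aff_def 1
    by (subst 2) (simp add: sum.distrib[symmetric] algebra_simps)
qed

lemma Phi_affine:
  assumes "finite F" "sum u F = 1"
  shows "Phi (\<lambda>i. \<Sum>v\<in>F. u v * v i) = (\<lambda>p. \<Sum>v\<in>F. u v * Phi v p)"
proof
  fix p
  show "Phi (\<lambda>i. \<Sum>v\<in>F. u v * v i) p = (\<Sum>v\<in>F. u v * Phi v p)"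
    by (cases "p \<in> gz_coords n") (simp_all add: Phi_def aff_comb[OF assms])
qed

definition VCh where "VCh = {x \<in> Xs kk. \<forall>g\<in>ChS. aff kk g x > 0}"

lemma Ch_eq: "cell_hat n lam a E EL ER = Phi ` VCh"
  unfolding VCh_def by (rule Ch_char)

lemma span_sub: "affine_span_fun (cell_hat n lam a E EL ER) \<subseteq> L0"
proof
  fix z assume "z \<in> affine_span_fun (cell_hat n lam a E EL ER)"
  then obtain F u where F: "finite F" "F \<noteq> {}" "F \<subseteq> cell_hat n lam a E EL ER" "sum u F = 1"
    and z: "z = (\<lambda>p. \<Sum>x\<in>F. u x * x p)"
    unfolding affine_span_fun_def by blast
  have FL: "F \<subseteq> L0" using F(3) unfolding Ch_eq L0_def VCh_def by blast
  have PP: "Phi (Psi w) = w" if "w \<in> F" for w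
    using FL that hom_PhiPsi unfolding homeomorphism_def by blast
  have injP: "inj_on Psi F" by (rule inj_on_inverseI[where g=Phi]) (rule PP)
  define G where "G = Psi ` F"
  have GX: "G \<subseteq> Xs kk" using Psi_Xs by (auto simp: G_def)
  have sumG: "(\<Sum>v\<in>G. f v) = (\<Sum>w\<in>F. f (Psi w))" for f :: "(nat \<Rightarrow> real) \<Rightarrow> real"
    unfolding G_def by (rule sum.reindex[OF injP, unfolded comp_def])
  have "sum (\<lambda>v. u (Phi v)) G = sum (\<lambda>w. u (Phi (Psi w))) F" by (rule sumG)
  also have "\<dots> = sum u F" using PP by (intro sum.cong) auto
  finally have s1: "sum (\<lambda>v. u (Phi v)) G = 1" using F(4) by (rule trans)
  have "z = (\<lambda>p. \<Sum>v\<in>G. u (Phi v) * Phi v p)" unfolding z sumG using PP by simp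
  also have "\<dots> = Phi (\<lambda>i. \<Sum>v\<in>G. u (Phi v) * v i)"
    by (rule Phi_affine[symmetric]) (simp add: G_def F(1), rule s1)
  finally have zz: "z = Phi (\<lambda>i. \<Sum>v\<in>G. u (Phi v) * v i)" .
  have "(\<lambda>i. \<Sum>v\<in>G. u (Phi v) * v i) \<in> Xs kk"
    unfolding Xs_def
  proof (intro CollectI allI impI)
    fix i assume "kk \<le> i"
    then have "\<forall>v\<in>G. v i = 0" using GX by (auto simp: Xs_def)
    then show "(\<Sum>v\<in>G. u (Phi v) * v i) = 0" by (intro sum.neutral) simp
  qed
  then show "z \<in> L0" unfolding zz L0_def by blast
qed

lemma span_sup:
  assumes x0: "x0 \<in> VCh"
  shows "L0 \<subseteq> affine_span_fun (cell_hat n lam a E EL ER)"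
proof
  fix y assume "y \<in> L0"
  then obtain x where xX: "x \<in> Xs kk" and y: "y = Phi x" unfolding L0_def by blast
  obtain chl where chl: "set chl = ChS" using finite_list[OF ChS_finite] by blast
  define W where "W = {x. \<forall>g\<in>set chl. 0 < aff kk g x}"
  have oW: "open W" unfolding W_def by (rule open_pos)
  have VW: "VCh = Xs kk \<inter> W" unfolding VCh_def W_def chl by auto
  have x0W: "x0 \<in> W" and x0X: "x0 \<in> Xs kk" using x0 VW by auto
  have exe: "\<exists>e>0. (\<lambda>j. if j = m then x0 j + e else x0 j) \<in> W" for m
    by (rule open_dir[OF oW x0W])
  define ep where "ep m = (SOME e. e > 0 \<and> (\<lambda>j. if j = m then x0 j + e else x0 j) \<in> W)" for m
  have ep: "ep m > 0 \<and> (\<lambda>j. if j = m then x0 j + ep m else x0 j) \<in> W" for m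
    unfolding ep_def by (rule someI_ex[OF exe])
  have epnz: "\<forall>m<kk. ep m \<noteq> 0"
  proof (intro allI impI)
    fix m show "ep m \<noteq> 0" using ep[of m] by simp
  qed
  obtain F u where F: "finite F" "F \<noteq> {}"
      "F \<subseteq> insert x0 ((\<lambda>m j. if j = m then x0 j + ep m else x0 j) ` {..<kk})"
      "sum u F = 1" and xF: "x = (\<lambda>i. \<Sum>v\<in>F. u v * v i)"
    using aspan_gen[OF x0X epnz xX] by blast
  have FV: "F \<subseteq> VCh"
  proof
    fix v assume "v \<in> F"
    then have "v = x0 \<or> (\<exists>m<kk. v = (\<lambda>j. if j = m then x0 j + ep m else x0 j))" using F(3) by auto
    then show "v \<in> VCh"
    proof
      assume "v = x0" then show ?thesis using x0 by simp
    next
      assume "\<exists>m<kk. v = (\<lambda>j. if j = m then x0 j + ep m else x0 j)"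
      then obtain m where m: "m < kk" "v = (\<lambda>j. if j = m then x0 j + ep m else x0 j)" by blast
      have "v \<in> W" using ep m by simp
      moreover have "v \<in> Xs kk" using x0X m by (auto simp: Xs_def)
      ultimately show ?thesis using VW by simp
    qed
  qed
  have FX: "F \<subseteq> Xs kk" using FV by (auto simp: VCh_def)
  have injF: "inj_on Phi F" using Phi_inj FX by (rule inj_on_subset)
  have sumF: "(\<Sum>w\<in>Phi ` F. f w) = (\<Sum>v\<in>F. f (Phi v))" for f :: "(nat \<times> nat \<Rightarrow> real) \<Rightarrow> real"
    by (rule sum.reindex[OF injF, unfolded comp_def])
  have PsiPhi: "Psi (Phi v) = v" if "v \<in> F" for v using FX that Psi_Phi by blast
  have "y = (\<lambda>p. \<Sum>v\<in>F. u v * Phi v p)" unfolding y xF by (rule Phi_affine[OF F(1) F(4)])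
  also have "\<dots> = (\<lambda>p. \<Sum>w\<in>Phi ` F. u (Psi w) * w p)" unfolding sumF using PsiPhi by simp
  finally have yy: "y = (\<lambda>p. \<Sum>w\<in>Phi ` F. u (Psi w) * w p)" .
  have s1: "sum (\<lambda>w. u (Psi w)) (Phi ` F) = 1" unfolding sumF using PsiPhi F(4) by simp
  have sub: "Phi ` F \<subseteq> cell_hat n lam a E EL ER" unfolding Ch_eq using FV by blast
  show "y \<in> affine_span_fun (cell_hat n lam a E EL ER)"
    unfolding affine_span_fun_def using F(1,2) sub s1 yy by blast
qed


definition QQ where "QQ = {x \<in> Xs kk. \<forall>g\<in>GZS. aff kk g x \<ge> 0}"
definition VV where "VV = {x \<in> Xs kk. \<forall>g\<in>ChS \<union> {g\<in>GZS. nonconst kk g}. aff kk g x > 0}"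

lemma cell_eq:
  assumes x0V: "x0 \<in> VCh" and x0Q: "x0 \<in> QQ"
  shows "cell n lam a E EL ER = Phi ` VV"
proof -
  have L: "affine_span_fun (cell_hat n lam a E EL ER) = L0"
    using span_sub span_sup[OF x0V] by blast
  have GL: "GZ_polytope n lam \<inter> L0 = Phi ` QQ"
  proof
    show "GZ_polytope n lam \<inter> L0 \<subseteq> Phi ` QQ"
    proof
      fix y assume "y \<in> GZ_polytope n lam \<inter> L0"
      then obtain x where x: "x \<in> Xs kk" "y = Phi x" "Phi x \<in> GZ_polytope n lam" unfolding L0_def by blast
      then have "x \<in> QQ" using GZ_char[OF x(1)] by (simp add: QQ_def)
      then show "y \<in> Phi ` QQ" using x by blast
    qed
    show "Phi ` QQ \<subseteq> GZ_polytope n lam \<inter> L0"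
    proof
      fix y assume "y \<in> Phi ` QQ"
      then obtain x where x: "x \<in> QQ" "y = Phi x" by blast
      have xX: "x \<in> Xs kk" using x by (simp add: QQ_def)
      then have "Phi x \<in> GZ_polytope n lam" using GZ_char[OF xX] x by (simp add: QQ_def)
      then show "y \<in> GZ_polytope n lam \<inter> L0" using x xX by (auto simp: L0_def)
    qed
  qed
  have hms: "homeomorphic_maps (top_of_set (Xs kk)) (top_of_set L0) Phi Psi"
    using hom_PhiPsi unfolding homeomorphic_maps_def homeomorphism_def by auto
  then have hm: "homeomorphic_map (top_of_set (Xs kk)) (top_of_set L0) Phi"
    using homeomorphic_map_maps by blast
  have QX: "QQ \<subseteq> topspace (top_of_set (Xs kk))" by (auto simp: QQ_def)
  obtain hs where hs: "set hs = GZS" using finite_list[OF GZS_finite] by blast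
  have IQ: "(top_of_set (Xs kk)) interior_of QQ = {x \<in> QQ. \<forall>h\<in>GZS. nonconst kk h \<longrightarrow> aff kk h x > 0}"
    using interior_Xs[of QQ kk hs] hs by (simp add: QQ_def)
  have int: "(top_of_set L0) interior_of (GZ_polytope n lam \<inter> L0) =
      Phi ` {x \<in> QQ. \<forall>h\<in>GZS. nonconst kk h \<longrightarrow> aff kk h x > 0}"
    unfolding GL homeomorphic_map_interior_of[OF hm QX] IQ ..
  have cell1: "cell n lam a E EL ER = Phi ` VCh \<inter> Phi ` {x \<in> QQ. \<forall>h\<in>GZS. nonconst kk h \<longrightarrow> aff kk h x > 0}"
    unfolding cell_def Let_def L int by (simp only: Ch_eq)
  also have "\<dots> = Phi ` (VCh \<inter> {x \<in> QQ. \<forall>h\<in>GZS. nonconst kk h \<longrightarrow> aff kk h x > 0})"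
    by (rule inj_on_image_Int[OF Phi_inj, symmetric]) (auto simp: VCh_def QQ_def)
  also have "VCh \<inter> {x \<in> QQ. \<forall>h\<in>GZS. nonconst kk h \<longrightarrow> aff kk h x > 0} = VV"
  proof
    show "VCh \<inter> {x \<in> QQ. \<forall>h\<in>GZS. nonconst kk h \<longrightarrow> aff kk h x > 0} \<subseteq> VV"
      by (auto simp: VCh_def QQ_def VV_def)
    show "VV \<subseteq> VCh \<inter> {x \<in> QQ. \<forall>h\<in>GZS. nonconst kk h \<longrightarrow> aff kk h x > 0}"
    proof
      fix x assume x: "x \<in> VV"
      have "aff kk g x \<ge> 0" if g: "g \<in> GZS" for g
      proof (cases "nonconst kk g")
        case True then show ?thesis using x g by (auto simp: VV_def intro: less_imp_le)
      next
        case False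
        then have "aff kk g x = aff kk g x0" by (simp add: aff_const)
        then show ?thesis using x0Q g by (simp add: QQ_def)
      qed
      then show "x \<in> VCh \<inter> {x \<in> QQ. \<forall>h\<in>GZS. nonconst kk h \<longrightarrow> aff kk h x > 0}"
        using x by (auto simp: VCh_def QQ_def VV_def)
    qed
  qed
  finally show ?thesis .
qed


definition x0 :: "nat \<Rightarrow> real" where
  "x0 m = (if m < kk then Yc (fst (enum m)) (snd (enum m)) else 0)"

lemma x0X: "x0 \<in> Xs kk" by (simp add: x0_def Xs_def)

lemma Tm_Yc: "gz_pos n i j \<Longrightarrow> aff kk (Tm i j) x0 = Yc i j"
proof (induction i arbitrary: j)
  case 0 then show ?case by simp
next
  case (Suc i)
  have pL: "gz_pos n i j" and pR: "gz_pos n i (j+1)" using Suc.prems by (auto simp: gz_pos_def)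
  show ?case
  proof (cases "EL (Suc i) j")
    case True then show ?thesis using Suc.IH[OF pL] Tm_EL[OF True] by simp
  next
    case nL: False
    show ?thesis
    proof (cases "ER (Suc i) j")
      case True then show ?thesis using Suc.IH[OF pR] Tm_ER[OF nL True] nL by simp
    next
      case nR: False
      show ?thesis
      proof (cases "E (Suc i) j")
        case True then show ?thesis using Tm_E[OF nL nR True] nL nR by simp
      next
        case nE: False
        have F: "(Suc i, j) \<in> Fr" using Suc.prems nE by (simp add: Fr_def)
        have "aff kk (Tm (Suc i) j) x0 = x0 (idx (Suc i, j))" using F by (rule aff_free)
        also have "\<dots> = Yc (Suc i) j" using idx_lt[OF F] enum_idx[OF F] by (simp add: x0_def)
        finally show ?thesis .
      qed
    qed
  qed
qed

lemma x0_VCh: "x0 \<in> VCh"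
  unfolding VCh_def
proof (intro CollectI conjI ballI x0X)
  fix g assume g: "g \<in> ChS"
  then obtain p where pF: "p \<in> Fr" and gp: "g = lowf (fst p - 1) (snd p) \<or> g = upf (fst p - 1) (snd p)"
    unfolding ChS_def by blast
  then obtain i j where p: "p = (Suc i, j)" using Fr_form by blast
  have F: "(Suc i, j) \<in> Fr" using pF p by simp
  have pos: "gz_pos n (Suc i) j" and nE: "\<not> E (Suc i) j" using F by (auto simp: Fr_def)
  have ne: "\<not> EL (Suc i) j" "\<not> ER (Suc i) j" using Fr_noedge[OF F] by auto
  have pL: "gz_pos n i j" and pR: "gz_pos n i (j+1)" using pos by (auto simp: gz_pos_def)
  have TL: "aff kk (Tm i j) x0 = Yc i j" using Tm_Yc[OF pL] .
  have TR: "aff kk (Tm i (j+1)) x0 = Yc i (j+1)" using Tm_Yc[OF pR] .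
  have TS: "aff kk (Tm (Suc i) j) x0 = Yc (Suc i) j" using Tm_Yc[OF pos] .
  define mx where "mx = max (Yc i j) (real_of_int (a (Suc i) j) - 1)"
  have mh: "mx < hiv i j" using stepA(4)[OF pos] ne nE by (simp add: mx_def)
  have YS: "Yc (Suc i) j = (mx + hiv i j) / 2" using ne nE by (simp add: mx_def hiv_def)
  have m1: "Yc i j \<le> mx" "real_of_int (a (Suc i) j) - 1 \<le> mx" by (auto simp: mx_def)
  have "aff kk (lowf i j) x0 > 0"
    using TL TS YS mh m1 by (simp add: lowf_def)
  moreover have "aff kk (upf i j) x0 > 0"
  proof -
    have lt: "Yc (Suc i) j < hiv i j" using YS mh by simp
    have e: "aff kk (upf i j) x0 = hiv i j - Yc (Suc i) j"
      using TR TS by (cases "a i (j+1) = a (Suc i) j") (simp_all add: upf_def hiv_def)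
    show ?thesis using lt e by simp
  qed
  ultimately show "aff kk g x0 > 0" using gp p by auto
qed

lemma GZS_form: "g \<in> GZS \<Longrightarrow> \<exists>i j. gz_pos n (Suc i) j \<and>
    (g = dif (Tm (Suc i) j) (Tm i j) \<or> g = dif (Tm i (j+1)) (Tm (Suc i) j))"
  unfolding GZS_def GP_def by auto

lemma x0_GZ: "g \<in> GZS \<Longrightarrow> aff kk g x0 \<ge> 0 \<and> (nonconst kk g \<longrightarrow> aff kk g x0 > 0)"
proof -
  assume "g \<in> GZS"
  then obtain i j where pos: "gz_pos n (Suc i) j"
    and gg: "g = dif (Tm (Suc i) j) (Tm i j) \<or> g = dif (Tm i (j+1)) (Tm (Suc i) j)"
    using GZS_form by blast
  have pL: "gz_pos n i j" and pR: "gz_pos n i (j+1)" using pos by (auto simp: gz_pos_def)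
  have TL: "aff kk (Tm i j) x0 = Yc i j" using Tm_Yc[OF pL] .
  have TR: "aff kk (Tm i (j+1)) x0 = Yc i (j+1)" using Tm_Yc[OF pR] .
  have TS: "aff kk (Tm (Suc i) j) x0 = Yc (Suc i) j" using Tm_Yc[OF pos] .
  have S2: "Yc i j \<le> Yc (Suc i) j" "Yc (Suc i) j \<le> Yc i (j+1)" using stepA(2)[OF pos] by auto
  have S3: "EL (Suc i) j \<or> Yc i j < Yc (Suc i) j" "ER (Suc i) j \<or> Yc (Suc i) j < Yc i (j+1)"
    using stepA(3)[OF pos] by auto
  show ?thesis
  proof (cases "g = dif (Tm (Suc i) j) (Tm i j)")
    case True
    have "aff kk g x0 \<ge> 0" using True TL TS S2 by simp
    moreover have "nonconst kk g \<longrightarrow> aff kk g x0 > 0"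
    proof (cases "EL (Suc i) j")
      case True
      then have "g = dif (Tm i j) (Tm i j)" using \<open>g = dif (Tm (Suc i) j) (Tm i j)\<close> Tm_EL by simp
      then show ?thesis using dif_self by simp
    next
      case False
      then show ?thesis using True TL TS S3 by simp
    qed
    ultimately show ?thesis by blast
  next
    case False
    then have g2: "g = dif (Tm i (j+1)) (Tm (Suc i) j)" using gg by blast
    have "aff kk g x0 \<ge> 0" using g2 TR TS S2 by simp
    moreover have "nonconst kk g \<longrightarrow> aff kk g x0 > 0"
    proof (cases "ER (Suc i) j")
      case True
      have "Tm (Suc i) j = Tm i (j+1)"
      proof (cases "EL (Suc i) j")
        case True
        then show ?thesis using Tm_EL[OF True] Tcons[OF pos True \<open>ER (Suc i) j\<close>] by simp
      next
        case False
        then show ?thesis using Tm_ER[OF False \<open>ER (Suc i) j\<close>] by simp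
      qed
      then have "g = dif (Tm i (j+1)) (Tm i (j+1))" using g2 by simp
      then show ?thesis using dif_self by simp
    next
      case False
      then show ?thesis using g2 TR TS S3 by simp
    qed
    ultimately show ?thesis by blast
  qed
qed

lemma x0_QQ: "x0 \<in> QQ"
  unfolding QQ_def using x0X x0_GZ by blast

lemma x0_VV: "x0 \<in> VV"
  unfolding VV_def using x0X x0_VCh x0_GZ by (auto simp: VCh_def)

definition Bd :: real where "Bd = (\<Sum>m\<in>{1..n}. \<bar>real_of_int (lam m)\<bar>)"

lemma GZ_bound:
  assumes y: "y \<in> GZ_polytope n lam"
  shows "gz_pos n i j \<Longrightarrow> \<bar>yext n lam y i j\<bar> \<le> Bd"
proof (induction i arbitrary: j)
  case 0
  have "n + 1 - j \<in> {1..n}" using 0 by (auto simp: gz_pos_def)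
  then have "\<bar>real_of_int (lam (n + 1 - j))\<bar> \<le> Bd"
    unfolding Bd_def by (rule member_le_sum[where f="\<lambda>m. \<bar>real_of_int (lam m)\<bar>"]) auto
  then show ?case by (simp add: yext_def)
next
  case (Suc i)
  have pL: "gz_pos n i j" and pR: "gz_pos n i (j+1)" using Suc.prems by (auto simp: gz_pos_def)
  have H: "\<forall>i j. 1 \<le> i \<and> gz_pos n i j \<longrightarrow>
      yext n lam y (i-1) j \<le> y (i,j) \<and> y (i,j) \<le> yext n lam y (i-1) (j+1)"
    using y unfolding GZ_polytope_def mem_Collect_eq by (elim conjE) assumption
  have "1 \<le> Suc i" by simp
  from H[rule_format, OF conjI[OF this Suc.prems]]
  have "yext n lam y i j \<le> y (Suc i, j)" "y (Suc i, j) \<le> yext n lam y i (j+1)" by simp_all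
  moreover have "\<bar>yext n lam y i j\<bar> \<le> Bd" "\<bar>yext n lam y i (j+1)\<bar> \<le> Bd"
    using Suc.IH[OF pL] Suc.IH[OF pR] .
  ultimately show ?case by (simp add: yext_def abs_le_iff)
qed

lemma VV_bound: "x \<in> VV \<Longrightarrow> \<forall>m<kk. \<bar>x m\<bar> \<le> Bd"
proof (intro allI impI)
  fix m assume x: "x \<in> VV" and m: "m < kk"
  have xX: "x \<in> Xs kk" using x by (simp add: VV_def)
  have "aff kk g x \<ge> 0" if g: "g \<in> GZS" for g
  proof (cases "nonconst kk g")
    case True then show ?thesis using x g by (auto simp: VV_def intro: less_imp_le)
  next
    case False
    then have "aff kk g x = aff kk g x0" by (simp add: aff_const)
    then show ?thesis using x0_GZ g by simp
  qed
  then have GZ: "Phi x \<in> GZ_polytope n lam" using GZ_char[OF xX] by blast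
  have F: "enum m \<in> Fr" using m by (rule enum_in)
  then obtain i j where e: "enum m = (Suc i, j)" using Fr_form by blast
  have pos: "gz_pos n (Suc i) j" using F e by (simp add: Fr_def)
  have "x m = Psi (Phi x) m" using Psi_Phi[OF xX] by simp
  also have "\<dots> = Phi x (Suc i, j)" using m e by (simp add: Psi_def)
  also have "\<dots> = yext n lam (Phi x) (Suc i) j" by (simp add: yext_def)
  finally show "\<bar>x m\<bar> \<le> Bd" using GZ_bound[OF GZ pos] by simp
qed

lemma rank_eq: "gz_rank n E = kk"
proof -
  have "{(i,j). gz_pos n i j \<and> \<not> E i j} = Fr"
  proof (auto simp: Fr_def)
    fix i j assume "gz_pos n i j" "\<not> E i j"
    then show "Suc 0 \<le> i" using r1[of j] by (cases i) auto
  qed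
  then show ?thesis by (simp add: gz_rank_def kk_def)
qed

theorem main: "cell n lam a E EL ER \<noteq> {} \<and>
         cell n lam a E EL ER homeomorphic open_ball_dim (gz_rank n E)"
proof -
  have ceq: "cell n lam a E EL ER = Phi ` VV" by (rule cell_eq[OF x0_VCh x0_QQ])
  have ne: "cell n lam a E EL ER \<noteq> {}" unfolding ceq using x0_VV by blast
  have VX: "VV \<subseteq> Xs kk" by (auto simp: VV_def)
  have "homeomorphism VV (Phi ` VV) Phi Psi"
    by (rule homeomorphism_of_subsets[OF hom_PhiPsi VX]) (auto simp: L0_def VX)
  then have h1: "Phi ` VV homeomorphic VV" using homeomorphic_def homeomorphic_sym by blast
  have fin: "finite (ChS \<union> {g\<in>GZS. nonconst kk g})" using ChS_finite GZS_finite by simp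
  obtain gl where gl: "set gl = ChS \<union> {g\<in>GZS. nonconst kk g}" using finite_list[OF fin] by blast
  have VVe: "VV = {x \<in> Xs kk. \<forall>g\<in>set gl. aff kk g x > 0}" unfolding VV_def gl ..
  have "{x \<in> Xs kk. \<forall>g\<in>set gl. aff kk g x > 0} homeomorphic open_ball_dim kk"
  proof (rule G1[OF x0X])
    show "\<forall>g\<in>set gl. aff kk g x0 > 0" using x0_VV unfolding VVe by blast
    show "\<forall>x\<in>{x \<in> Xs kk. \<forall>g\<in>set gl. aff kk g x > 0}. \<forall>i<kk. \<bar>x i\<bar> \<le> Bd"
      using VV_bound unfolding VVe by blast
  qed
  then have "VV homeomorphic open_ball_dim kk" unfolding VVe .
  then have "cell n lam a E EL ER homeomorphic open_ball_dim kk"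
    unfolding ceq using h1 homeomorphic_trans by blast
  then show ?thesis using ne rank_eq by simp
qed

end

theorem lemma5p2:
  fixes n :: nat and lam :: "nat \<Rightarrow> int" and a :: "nat \<Rightarrow> nat \<Rightarrow> int"
    and E EL ER :: "nat \<Rightarrow> nat \<Rightarrow> bool"
  assumes "is_partition n lam"
    and "is_enhanced_GZ n lam a E EL ER"
  shows "cell n lam a E EL ER \<noteq> {} \<and>
         cell n lam a E EL ER homeomorphic open_ball_dim (gz_rank n E)"
  proof -
  interpret gzl n lam a E EL ER using assms by unfold_locales
  show ?thesis by (rule main)
qed

end
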